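(* There exists an integer $g_0$ with the following property. Let $g\ge g_0$ and let $\mathfrak g$ be a semisimple complex Lie algebra with inclusions $\mathfrak{sp}(2g-10)\subset\mathfrak g\subset\mathfrak{sp}(4g-4)$ such that the composite inclusion $\mathfrak{sp}(2g-10)\subset\mathfrak{sp}(4g-4)$ is the linear embedding given by the diagonal action on the direct sum of two copies of the standard representation of $\mathfrak{sp}(2g-10)$ (plus a trivial complement). Suppose that the action of $\mathfrak g$ on $\mathbb C^{4g-4}$ is irreducible, and that $\mathfrak g$ contains an element $A$ which acts on $\mathbb C^{4g-4}$ as a nilpotent endomorphism with exactly one nontrivial Jordan block, that block having size $2$ (i.e. $A$ is nilpotent of rank one). Then $\mathfrak g=\mathfrak{sp}(4g-4)$. *)

theory Defs
  imports Complex_Main "Jordan_Normal_Form.Matrix" "Jordan_Normal_Form.DL_Rank"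
begin

definition lie_bracket :: "complex mat \<Rightarrow> complex mat \<Rightarrow> complex mat" where
  "lie_bracket X Y = X * Y - Y * X"

definition mat_subspace :: "nat \<Rightarrow> complex mat set \<Rightarrow> bool" where
  "mat_subspace n S \<longleftrightarrow> S \<subseteq> carrier_mat n n \<and> 0\<^sub>m n n \<in> S \<and>
     (\<forall>X\<in>S. \<forall>Y\<in>S. X + Y \<in> S) \<and> (\<forall>c. \<forall>X\<in>S. c \<cdot>\<^sub>m X \<in> S)"

definition lie_subalgebra :: "nat \<Rightarrow> complex mat set \<Rightarrow> bool" where
  "lie_subalgebra n L \<longleftrightarrow> mat_subspace n L \<and> (\<forall>X\<in>L. \<forall>Y\<in>L. lie_bracket X Y \<in> L)"

definition lie_ideal :: "nat \<Rightarrow> complex mat set \<Rightarrow> complex mat set \<Rightarrow> bool" where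
  "lie_ideal n I L \<longleftrightarrow> mat_subspace n I \<and> I \<subseteq> L \<and> (\<forall>X\<in>L. \<forall>Y\<in>I. lie_bracket X Y \<in> I)"

inductive_set mat_span :: "nat \<Rightarrow> complex mat set \<Rightarrow> complex mat set" for n S where
  zero: "0\<^sub>m n n \<in> mat_span n S"
| base: "X \<in> S \<Longrightarrow> X \<in> mat_span n S"
| add: "X \<in> mat_span n S \<Longrightarrow> Y \<in> mat_span n S \<Longrightarrow> X + Y \<in> mat_span n S"
| smult: "X \<in> mat_span n S \<Longrightarrow> c \<cdot>\<^sub>m X \<in> mat_span n S"

fun derived :: "nat \<Rightarrow> nat \<Rightarrow> complex mat set \<Rightarrow> complex mat set" where
  "derived n 0 I = I"
| "derived n (Suc k) I =
     mat_span n {lie_bracket X Y | X Y. X \<in> derived n k I \<and> Y \<in> derived n k I}"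

definition solvable_lie :: "nat \<Rightarrow> complex mat set \<Rightarrow> bool" where
  "solvable_lie n I \<longleftrightarrow> (\<exists>k. derived n k I \<subseteq> {0\<^sub>m n n})"

definition semisimple_lie :: "nat \<Rightarrow> complex mat set \<Rightarrow> bool" where
  "semisimple_lie n L \<longleftrightarrow> lie_subalgebra n L \<and> L \<noteq> {0\<^sub>m n n} \<and>
     (\<forall>I. lie_ideal n I L \<and> solvable_lie n I \<longrightarrow> I = {0\<^sub>m n n})"

text \<open>Standard symplectic form J = [[0, I_N], [-I_N, 0]] on C^(2N), and sp(2N).\<close>
definition sympl_J :: "nat \<Rightarrow> complex mat" where
  "sympl_J N = mat (2*N) (2*N) (\<lambda>(i,j).
      if i < N \<and> j = i + N then 1 else if N \<le> i \<and> j + N = i then -1 else 0)"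

definition sp :: "nat \<Rightarrow> complex mat set" where
  "sp N = {X \<in> carrier_mat (2*N) (2*N).
            transpose_mat X * sympl_J N + sympl_J N * X = 0\<^sub>m (2*N) (2*N)}"

text \<open>Position of big index i (in C^(2N), basis e_1..e_N,f_1..f_N) inside one of two
  copies (0 or 1) of C^(2m) (basis e_1..e_m,f_1..f_m); None = trivial complement.
  Copy c uses e_(cm+1..cm+m), f_(cm+1..cm+m).\<close>
definition emb_pos :: "nat \<Rightarrow> nat \<Rightarrow> nat \<Rightarrow> (nat \<times> nat) option" where
  "emb_pos m N i =
     (if i < N then (if i < 2*m then Some (i div m, i mod m) else None)
      else (if i - N < 2*m then Some ((i - N) div m, m + (i - N) mod m) else None))"

text \<open>The embedding sp(2m) -> sp(2N): diagonal action on two copies of the standard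
  representation plus a trivial complement (requires 2m \<le> N).\<close>
definition diag_emb :: "nat \<Rightarrow> nat \<Rightarrow> complex mat \<Rightarrow> complex mat" where
  "diag_emb m N X = mat (2*N) (2*N) (\<lambda>(i,j).
      (case (emb_pos m N i, emb_pos m N j) of
         (Some (c, k), Some (d, l)) \<Rightarrow> if c = d then X $$ (k, l) else 0
       | _ \<Rightarrow> 0))"

definition vec_subspace :: "nat \<Rightarrow> complex vec set \<Rightarrow> bool" where
  "vec_subspace n W \<longleftrightarrow> W \<subseteq> carrier_vec n \<and> 0\<^sub>v n \<in> W \<and>
     (\<forall>v\<in>W. \<forall>w\<in>W. v + w \<in> W) \<and> (\<forall>c. \<forall>v\<in>W. c \<cdot>\<^sub>v v \<in> W)"

definition irreducible_action :: "nat \<Rightarrow> complex mat set \<Rightarrow> bool" where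
  "irreducible_action n L \<longleftrightarrow> n > 0 \<and>
     (\<forall>W. vec_subspace n W \<and> (\<forall>A\<in>L. \<forall>w\<in>W. A *\<^sub>v w \<in> W) \<longrightarrow>
          W = {0\<^sub>v n} \<or> W = carrier_vec n)"

definition nilpotent_mat :: "nat \<Rightarrow> complex mat \<Rightarrow> bool" where
  "nilpotent_mat n A \<longleftrightarrow> A \<in> carrier_mat n n \<and> (\<exists>k. A ^\<^sub>m k = 0\<^sub>m n n)"

end

theory Submission
  imports Defs
begin


definition om :: "nat \<Rightarrow> complex vec \<Rightarrow> complex vec \<Rightarrow> complex" where
  "om N x y = x \<bullet> (sympl_J N *\<^sub>v y)"

lemma sympl_J_carrier[simp]: "sympl_J N \<in> carrier_mat (2*N) (2*N)"
  unfolding sympl_J_def by simp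

lemma sympl_J_dims[simp]: "dim_row (sympl_J N) = 2*N" "dim_col (sympl_J N) = 2*N"
  unfolding sympl_J_def by simp_all

lemma Jv: assumes "y \<in> carrier_vec (2*N)" "i < 2*N"
  shows "(sympl_J N *\<^sub>v y) $ i = (if i < N then y $ (i+N) else - y $ (i-N))"
proof -
  have "(sympl_J N *\<^sub>v y) $ i = (\<Sum>j<2*N. (if i < N \<and> j = i + N then 1 else if N \<le> i \<and> j + N = i then -1 else 0) * y $ j)"
    using assms unfolding sympl_J_def
    by (simp add: scalar_prod_def lessThan_atLeast0)
  also have "\<dots> = (if i < N then y $ (i+N) else - y $ (i-N))"
  proof (cases "i < N")
    case True
    then have "(\<Sum>j<2*N. (if i < N \<and> j = i + N then 1 else if N \<le> i \<and> j + N = i then -1 else 0) * y $ j)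
      = (\<Sum>j<2*N. (if j = i + N then y $ j else 0))"
      by (intro sum.cong) auto
    also have "\<dots> = y $ (i+N)" using True by (simp add: sum.delta')
    finally show ?thesis using True by simp
  next
    case False
    then have "(\<Sum>j<2*N. (if i < N \<and> j = i + N then 1 else if N \<le> i \<and> j + N = i then -1 else 0) * y $ j)
      = (\<Sum>j<2*N. (if j = i - N then - y $ j else 0))"
      by (intro sum.cong) auto
    also have "\<dots> = - y $ (i-N)" using False assms(2) by (simp add: sum.delta')
    finally show ?thesis using False by simp
  qed
  finally show ?thesis .
qed

lemma om_explicit: assumes "x \<in> carrier_vec (2*N)" "y \<in> carrier_vec (2*N)"
  shows "om N x y = (\<Sum>i<N. x$i * y$(i+N) - x$(i+N) * y$i)"
proof -
  have "om N x y = (\<Sum>i<2*N. x$i * (sympl_J N *\<^sub>v y) $ i)"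
    using assms unfolding om_def scalar_prod_def by (simp add: lessThan_atLeast0 carrier_matD[OF sympl_J_carrier] del: index_mult_mat_vec)
  also have "\<dots> = (\<Sum>i<2*N. x$i * (if i < N then y $ (i+N) else - y $ (i-N)))"
    by (intro sum.cong refl) (simp add: Jv assms(2) del: index_mult_mat_vec)
  also have "\<dots> = (\<Sum>i<N. x$i * y$(i+N)) + (\<Sum>i\<in>{N..<2*N}. x$i * (- y $ (i-N)))"
  proof -
    have e: "{..<2*N} = {..<N} \<union> {N..<2*N}" by auto
    have "(\<Sum>i<2*N. x$i * (if i < N then y $ (i+N) else - y $ (i-N))) =
      (\<Sum>i\<in>{..<N}. x$i * (if i < N then y $ (i+N) else - y $ (i-N))) +
      (\<Sum>i\<in>{N..<2*N}. x$i * (if i < N then y $ (i+N) else - y $ (i-N)))"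
      unfolding e by (rule sum.union_disjoint) auto
    then show ?thesis by simp
  qed
  also have "(\<Sum>i\<in>{N..<2*N}. x$i * (- y $ (i-N))) = (\<Sum>i<N. x$(i+N) * (- y $ i))"
  proof -
    have "(\<Sum>i<N. x$(i+N) * (- y $ i)) = (\<Sum>i\<in>(\<lambda>i. i+N) ` {..<N}. x$i * (- y $ (i-N)))"
      by (subst sum.reindex) (auto simp: inj_on_def)
    moreover have "(\<lambda>i. i+N) ` {..<N} = {N..<2*N}"
    proof (auto simp: image_iff)
      fix x assume "N \<le> x" "x < 2*N"
      thus "\<exists>xa\<in>{..<N}. x = xa + N" by (intro bexI[of _ "x - N"]) auto
    qed
    ultimately show ?thesis by simp
  qed
  finally show ?thesis by (simp add: sum_subtractf[symmetric] sum.distrib[symmetric] algebra_simps)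
qed


lemma om_add_left: assumes "x \<in> carrier_vec (2*N)" "y \<in> carrier_vec (2*N)" "z \<in> carrier_vec (2*N)"
  shows "om N (x + y) z = om N x z + om N y z"
  using assms by (simp add: om_explicit sum.distrib[symmetric] algebra_simps)

lemma om_add_right: assumes "x \<in> carrier_vec (2*N)" "y \<in> carrier_vec (2*N)" "z \<in> carrier_vec (2*N)"
  shows "om N z (x + y) = om N z x + om N z y"
  using assms by (simp add: om_explicit sum.distrib[symmetric] algebra_simps)

lemma om_smult_left: assumes "x \<in> carrier_vec (2*N)" "z \<in> carrier_vec (2*N)"
  shows "om N (c \<cdot>\<^sub>v x) z = c * om N x z"
  using assms by (simp add: om_explicit sum_distrib_left algebra_simps)

lemma om_smult_right: assumes "x \<in> carrier_vec (2*N)" "z \<in> carrier_vec (2*N)"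
  shows "om N z (c \<cdot>\<^sub>v x) = c * om N z x"
  using assms by (simp add: om_explicit sum_distrib_left algebra_simps)

lemma om_minus_left: assumes "x \<in> carrier_vec (2*N)" "y \<in> carrier_vec (2*N)" "z \<in> carrier_vec (2*N)"
  shows "om N (x - y) z = om N x z - om N y z"
  using assms by (simp add: om_explicit sum_subtractf[symmetric] algebra_simps)

lemma om_minus_right: assumes "x \<in> carrier_vec (2*N)" "y \<in> carrier_vec (2*N)" "z \<in> carrier_vec (2*N)"
  shows "om N z (x - y) = om N z x - om N z y"
  using assms by (simp add: om_explicit sum_subtractf[symmetric] algebra_simps)

lemma om_zero_left: assumes "z \<in> carrier_vec (2*N)" shows "om N (0\<^sub>v (2*N)) z = 0"
  using assms by (simp add: om_explicit)

lemma om_zero_right: assumes "z \<in> carrier_vec (2*N)" shows "om N z (0\<^sub>v (2*N)) = 0"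
  using assms by (simp add: om_explicit)

lemma om_antisym: assumes "x \<in> carrier_vec (2*N)" "y \<in> carrier_vec (2*N)"
  shows "om N x y = - om N y x"
  using assms by (simp add: om_explicit sum_negf[symmetric] algebra_simps)

lemma om_self: assumes "x \<in> carrier_vec (2*N)" shows "om N x x = 0"
  using om_antisym[OF assms assms] by simp

lemma om_nondeg: assumes "x \<in> carrier_vec (2*N)" "\<And>y. y \<in> carrier_vec (2*N) \<Longrightarrow> om N x y = 0"
  shows "x = 0\<^sub>v (2*N)"
proof (rule eq_vecI)
  fix i assume "i < dim_vec (0\<^sub>v (2*N))"
  hence i: "i < 2*N" by simp
  show "x $ i = 0\<^sub>v (2*N) $ i"
  proof (cases "i < N")
    case True
    have "om N x (unit_vec (2*N) (i+N)) = (\<Sum>k<N. x$k * unit_vec (2*N) (i+N) $ (k+N) - x$(k+N) * unit_vec (2*N) (i+N) $ k)"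
      using assms by (simp add: om_explicit)
    also have "\<dots> = (\<Sum>k<N. if k = i then x$k else 0)"
      using True by (intro sum.cong) auto
    also have "\<dots> = x $ i" using True by simp
    finally show ?thesis using assms(2)[of "unit_vec (2*N) (i+N)"] i by simp
  next
    case False
    have "om N x (unit_vec (2*N) (i-N)) = (\<Sum>k<N. x$k * unit_vec (2*N) (i-N) $ (k+N) - x$(k+N) * unit_vec (2*N) (i-N) $ k)"
      using assms i by (simp add: om_explicit)
    also have "\<dots> = (\<Sum>k<N. if k = i - N then - x$(k+N) else 0)"
      using False i by (intro sum.cong) auto
    also have "\<dots> = - x $ i" using False i by simp
    finally show ?thesis using assms(2)[of "unit_vec (2*N) (i-N)"] i by simp
  qed
qed (use assms in auto)

lemma om_transpose: assumes "y \<in> carrier_vec (2*N)" "z \<in> carrier_vec (2*N)"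
  shows "om N y z = (transpose_mat (sympl_J N) *\<^sub>v y) \<bullet> z"
  using assms unfolding om_def by (simp add: transpose_vec_mult_scalar[of "sympl_J N" "2*N" "2*N"])

lemma om_unit: assumes "y \<in> carrier_vec (2*N)" "b < 2*N"
  shows "om N y (unit_vec (2*N) b) = (transpose_mat (sympl_J N) *\<^sub>v y) $ b"
  using assms by (simp add: om_transpose)

lemma om_sum: assumes "y \<in> carrier_vec (2*N)" "z \<in> carrier_vec (2*N)"
  shows "om N y z = (\<Sum>b<2*N. om N y (unit_vec (2*N) b) * z $ b)"
proof -
  have "om N y z = (\<Sum>b<2*N. (transpose_mat (sympl_J N) *\<^sub>v y) $ b * z $ b)"
    using assms by (simp add: om_transpose scalar_prod_def lessThan_atLeast0)
  also have "\<dots> = (\<Sum>b<2*N. om N y (unit_vec (2*N) b) * z $ b)"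
    using assms by (intro sum.cong) (simp_all add: om_unit)
  finally show ?thesis .
qed

definition sk :: "nat \<Rightarrow> complex mat \<Rightarrow> bool" where
  "sk N X \<longleftrightarrow> X \<in> carrier_mat (2*N) (2*N) \<and>
     (\<forall>a \<in> carrier_vec (2*N). \<forall>b \<in> carrier_vec (2*N). om N (X *\<^sub>v a) b = - om N a (X *\<^sub>v b))"

lemma sp_sk: assumes "X \<in> sp N" shows "sk N X"
proof -
  have X: "X \<in> carrier_mat (2*N) (2*N)" and e: "transpose_mat X * sympl_J N + sympl_J N * X = 0\<^sub>m (2*N) (2*N)"
    using assms unfolding sp_def by auto
  have "om N (X *\<^sub>v a) b = - om N a (X *\<^sub>v b)" if a: "a \<in> carrier_vec (2*N)" and b: "b \<in> carrier_vec (2*N)" for a b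
  proof -
    have "(transpose_mat X * sympl_J N + sympl_J N * X) *\<^sub>v b = 0\<^sub>v (2*N)"
      using e b by (auto intro!: eq_vecI simp: scalar_prod_def)
    hence "transpose_mat X *\<^sub>v (sympl_J N *\<^sub>v b) + sympl_J N *\<^sub>v (X *\<^sub>v b) = 0\<^sub>v (2*N)"
    proof -
      have XT: "transpose_mat X \<in> carrier_mat (2*N) (2*N)" using X by simp
      have "(transpose_mat X * sympl_J N + sympl_J N * X) *\<^sub>v b = (transpose_mat X * sympl_J N) *\<^sub>v b + (sympl_J N * X) *\<^sub>v b"
        by (rule add_mult_distrib_mat_vec) (use X XT b in auto)
      also have "(transpose_mat X * sympl_J N) *\<^sub>v b = transpose_mat X *\<^sub>v (sympl_J N *\<^sub>v b)"
        by (rule assoc_mult_mat_vec) (use X XT b in auto)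
      also have "(sympl_J N * X) *\<^sub>v b = sympl_J N *\<^sub>v (X *\<^sub>v b)"
        by (rule assoc_mult_mat_vec) (use X XT b in auto)
      finally show ?thesis using \<open>(transpose_mat X * sympl_J N + sympl_J N * X) *\<^sub>v b = 0\<^sub>v (2*N)\<close> by simp
    qed
    hence "a \<bullet> (transpose_mat X *\<^sub>v (sympl_J N *\<^sub>v b) + sympl_J N *\<^sub>v (X *\<^sub>v b)) = 0"
      using a by simp
    hence "a \<bullet> (transpose_mat X *\<^sub>v (sympl_J N *\<^sub>v b)) + a \<bullet> (sympl_J N *\<^sub>v (X *\<^sub>v b)) = 0"
      using X a b by (subst (asm) scalar_prod_add_distrib[of _ "2*N"]) (auto intro!: mult_mat_vec_carrier[of _ "2*N" "2*N"])
    moreover have "a \<bullet> (transpose_mat X *\<^sub>v (sympl_J N *\<^sub>v b)) = (X *\<^sub>v a) \<bullet> (sympl_J N *\<^sub>v b)"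
      using transpose_vec_mult_scalar[of "transpose_mat X" "2*N" "2*N" "sympl_J N *\<^sub>v b" a] X a b
        mult_mat_vec_carrier[OF sympl_J_carrier b] by simp
    ultimately show ?thesis unfolding om_def by (simp add: eq_neg_iff_add_eq_0)
  qed
  thus ?thesis using X unfolding sk_def by auto
qed


definition Bm :: "nat \<Rightarrow> complex vec \<Rightarrow> complex vec \<Rightarrow> complex mat" where
  "Bm N x y = mat (2*N) (2*N) (\<lambda>(a,b). x$a * om N y (unit_vec (2*N) b) + y$a * om N x (unit_vec (2*N) b))"

definition Am :: "nat \<Rightarrow> complex vec \<Rightarrow> complex mat" where
  "Am N u = mat (2*N) (2*N) (\<lambda>(a,b). u$a * om N u (unit_vec (2*N) b))"

lemma Bm_carrier[simp]: "Bm N x y \<in> carrier_mat (2*N) (2*N)" unfolding Bm_def by simp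
lemma Am_carrier[simp]: "Am N u \<in> carrier_mat (2*N) (2*N)" unfolding Am_def by simp
lemma Bm_dims[simp]: "dim_row (Bm N x y) = 2*N" "dim_col (Bm N x y) = 2*N" unfolding Bm_def by simp_all
lemma Am_dims[simp]: "dim_row (Am N u) = 2*N" "dim_col (Am N u) = 2*N" unfolding Am_def by simp_all

lemma Bm_act: assumes "x \<in> carrier_vec (2*N)" "y \<in> carrier_vec (2*N)" "z \<in> carrier_vec (2*N)"
  shows "Bm N x y *\<^sub>v z = om N y z \<cdot>\<^sub>v x + om N x z \<cdot>\<^sub>v y"
proof (rule eq_vecI)
  fix i assume "i < dim_vec (om N y z \<cdot>\<^sub>v x + om N x z \<cdot>\<^sub>v y)"
  hence i: "i < 2*N" using assms by simp
  have "(Bm N x y *\<^sub>v z) $ i = (\<Sum>b<2*N. (x$i * om N y (unit_vec (2*N) b) + y$i * om N x (unit_vec (2*N) b)) * z$b)"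
    using i assms unfolding Bm_def by (simp add: scalar_prod_def lessThan_atLeast0)
  also have "\<dots> = x$i * (\<Sum>b<2*N. om N y (unit_vec (2*N) b) * z$b) + y$i * (\<Sum>b<2*N. om N x (unit_vec (2*N) b) * z$b)"
    by (simp add: sum_distrib_left sum.distrib algebra_simps)
  also have "\<dots> = x$i * om N y z + y$i * om N x z"
    using assms by (simp add: om_sum[symmetric])
  finally show "(Bm N x y *\<^sub>v z) $ i = (om N y z \<cdot>\<^sub>v x + om N x z \<cdot>\<^sub>v y) $ i"
    using i assms by simp
qed (use assms in simp)

lemma Am_act: assumes "u \<in> carrier_vec (2*N)" "z \<in> carrier_vec (2*N)"
  shows "Am N u *\<^sub>v z = om N u z \<cdot>\<^sub>v u"
proof (rule eq_vecI)
  fix i assume "i < dim_vec (om N u z \<cdot>\<^sub>v u)"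
  hence i: "i < 2*N" using assms by simp
  have "(Am N u *\<^sub>v z) $ i = (\<Sum>b<2*N. (u$i * om N u (unit_vec (2*N) b)) * z$b)"
    using i assms unfolding Am_def by (simp add: scalar_prod_def lessThan_atLeast0)
  also have "\<dots> = u$i * (\<Sum>b<2*N. om N u (unit_vec (2*N) b) * z$b)"
    by (simp add: sum_distrib_left algebra_simps)
  also have "\<dots> = u$i * om N u z"
    using assms by (simp add: om_sum[symmetric])
  finally show "(Am N u *\<^sub>v z) $ i = (om N u z \<cdot>\<^sub>v u) $ i"
    using i assms by simp
qed (use assms in simp)

lemma mat_eq_act: fixes A B :: "complex mat" assumes "A \<in> carrier_mat n n" "B \<in> carrier_mat n n"
  "\<And>z. z \<in> carrier_vec n \<Longrightarrow> A *\<^sub>v z = B *\<^sub>v z"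
  shows "A = B"
proof (rule eq_matI)
  fix i j assume ij: "i < dim_row B" "j < dim_col B"
  have "A $$ (i,j) = (A *\<^sub>v unit_vec n j) $ i" using assms(1,2) ij by simp
  also have "\<dots> = (B *\<^sub>v unit_vec n j) $ i" using assms(3)[of "unit_vec n j"] ij assms by simp
  also have "\<dots> = B $$ (i,j)" using assms(1,2) ij by simp
  finally show "A $$ (i,j) = B $$ (i,j)" .
qed (use assms in auto)

lemma br_act: assumes "X \<in> carrier_mat n n" "Y \<in> carrier_mat n n" "z \<in> carrier_vec n"
  shows "lie_bracket X Y *\<^sub>v z = X *\<^sub>v (Y *\<^sub>v z) - Y *\<^sub>v (X *\<^sub>v z)"
  unfolding lie_bracket_def using assms
  by (simp add: minus_mult_distrib_mat_vec[of _ n n] assoc_mult_mat_vec[of _ n n _ n])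

lemma br_carrier[simp]: assumes "X \<in> carrier_mat n n" "Y \<in> carrier_mat n n"
  shows "lie_bracket X Y \<in> carrier_mat n n"
  unfolding lie_bracket_def using assms by (metis minus_carrier_mat mult_carrier_mat)

lemma skD: "sk N X \<Longrightarrow> a \<in> carrier_vec (2*N) \<Longrightarrow> b \<in> carrier_vec (2*N) \<Longrightarrow> om N a (X *\<^sub>v b) = - om N (X *\<^sub>v a) b"
  unfolding sk_def by auto

lemma skC: "sk N X \<Longrightarrow> X \<in> carrier_mat (2*N) (2*N)" unfolding sk_def by auto

lemma mvC: "X \<in> carrier_mat n n \<Longrightarrow> a \<in> carrier_vec n \<Longrightarrow> X *\<^sub>v a \<in> carrier_vec n"
  by (rule mult_mat_vec_carrier)

lemma br_Bm: assumes X: "sk N X" and x: "x \<in> carrier_vec (2*N)" and y: "y \<in> carrier_vec (2*N)"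
  shows "lie_bracket X (Bm N x y) = Bm N (X *\<^sub>v x) y + Bm N x (X *\<^sub>v y)"
proof (rule mat_eq_act[of _ "2*N"])
  have XC: "X \<in> carrier_mat (2*N) (2*N)" using skC[OF X] .
  fix z :: "complex vec" assume z: "z \<in> carrier_vec (2*N)"
  have Xx: "X *\<^sub>v x \<in> carrier_vec (2*N)" and Xy: "X *\<^sub>v y \<in> carrier_vec (2*N)" and Xz: "X *\<^sub>v z \<in> carrier_vec (2*N)"
    using XC x y z by (auto intro: mvC)
  have "lie_bracket X (Bm N x y) *\<^sub>v z = X *\<^sub>v (om N y z \<cdot>\<^sub>v x + om N x z \<cdot>\<^sub>v y) - (om N y (X *\<^sub>v z) \<cdot>\<^sub>v x + om N x (X *\<^sub>v z) \<cdot>\<^sub>v y)"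
    using XC x y z Xz by (simp add: br_act Bm_act)
  also have "\<dots> = (om N y z \<cdot>\<^sub>v (X *\<^sub>v x) + om N x z \<cdot>\<^sub>v (X *\<^sub>v y)) - ((- om N (X *\<^sub>v y) z) \<cdot>\<^sub>v x + (- om N (X *\<^sub>v x) z) \<cdot>\<^sub>v y)"
    using XC x y z by (simp add: mult_add_distrib_mat_vec[of _ "2*N" "2*N"] mult_mat_vec[of _ "2*N" "2*N"] skD[OF X])
  also have "\<dots> = (om N y z \<cdot>\<^sub>v (X *\<^sub>v x) + om N (X *\<^sub>v x) z \<cdot>\<^sub>v y) + (om N (X *\<^sub>v y) z \<cdot>\<^sub>v x + om N x z \<cdot>\<^sub>v (X *\<^sub>v y))"
    apply (rule eq_vecI)
    using XC Xx Xy x y z by simp_all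
  also have "\<dots> = (Bm N (X *\<^sub>v x) y + Bm N x (X *\<^sub>v y)) *\<^sub>v z"
    using XC x y z Xx Xy by (simp add: add_mult_distrib_mat_vec[of _ "2*N" "2*N"] Bm_act)
  finally show "lie_bracket X (Bm N x y) *\<^sub>v z = (Bm N (X *\<^sub>v x) y + Bm N x (X *\<^sub>v y)) *\<^sub>v z" .
qed (use skC[OF X] in auto)


lemma smult_mat_act: assumes "A \<in> carrier_mat n m" "v \<in> carrier_vec m"
  shows "(c \<cdot>\<^sub>m A) *\<^sub>v v = c \<cdot>\<^sub>v (A *\<^sub>v v)"
  using assms by (auto intro!: eq_vecI simp: scalar_prod_def sum_distrib_left algebra_simps)

lemma add_mat_act: assumes "A \<in> carrier_mat n m" "B \<in> carrier_mat n m" "v \<in> carrier_vec m"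
  shows "(A + B) *\<^sub>v v = A *\<^sub>v v + B *\<^sub>v v"
  using assms by (rule add_mult_distrib_mat_vec)

lemma br_Am: assumes X: "sk N X" and u: "u \<in> carrier_vec (2*N)"
  shows "lie_bracket X (Am N u) = Bm N (X *\<^sub>v u) u"
proof (rule mat_eq_act[of _ "2*N"])
  have XC: "X \<in> carrier_mat (2*N) (2*N)" using skC[OF X] .
  fix z :: "complex vec" assume z: "z \<in> carrier_vec (2*N)"
  have Xu: "X *\<^sub>v u \<in> carrier_vec (2*N)" and Xz: "X *\<^sub>v z \<in> carrier_vec (2*N)"
    using XC u z by (auto intro: mvC)
  have "lie_bracket X (Am N u) *\<^sub>v z = X *\<^sub>v (om N u z \<cdot>\<^sub>v u) - om N u (X *\<^sub>v z) \<cdot>\<^sub>v u"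
    using XC u z Xz by (simp add: br_act Am_act)
  also have "\<dots> = om N u z \<cdot>\<^sub>v (X *\<^sub>v u) - (- om N (X *\<^sub>v u) z) \<cdot>\<^sub>v u"
    using XC u z by (simp add: mult_mat_vec[of _ "2*N" "2*N"] skD[OF X])
  also have "\<dots> = Bm N (X *\<^sub>v u) u *\<^sub>v z"
    apply (subst Bm_act) using XC Xu u z apply simp_all
    apply (rule eq_vecI) by simp_all
  finally show "lie_bracket X (Am N u) *\<^sub>v z = Bm N (X *\<^sub>v u) u *\<^sub>v z" .
qed (use skC[OF X] in auto)

lemma Bm_self: assumes u: "u \<in> carrier_vec (2*N)" shows "Bm N u u = 2 \<cdot>\<^sub>m Am N u"
  unfolding Bm_def Am_def by (rule eq_matI) auto

lemma Bm_sym: "Bm N x y = Bm N y x"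
  unfolding Bm_def by (rule eq_matI) auto

lemma br_AA: assumes u: "u \<in> carrier_vec (2*N)" and v: "v \<in> carrier_vec (2*N)"
  shows "lie_bracket (Am N u) (Am N v) = om N u v \<cdot>\<^sub>m Bm N u v"
proof (rule mat_eq_act[of _ "2*N"])
  fix z :: "complex vec" assume z: "z \<in> carrier_vec (2*N)"
  have "lie_bracket (Am N u) (Am N v) *\<^sub>v z = (om N v z * om N u v) \<cdot>\<^sub>v u - (om N u z * om N v u) \<cdot>\<^sub>v v"
    using u v z by (simp add: br_act[of _ "2*N"] Am_act om_smult_right smult_smult_assoc)
  also have "\<dots> = (om N u v \<cdot>\<^sub>m Bm N u v) *\<^sub>v z"
    using u v z om_antisym[OF v u] apply (simp add: smult_mat_act[of _ "2*N" "2*N"] Bm_act)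
    by (rule eq_vecI; simp; (simp add: algebra_simps)?)
  finally show "lie_bracket (Am N u) (Am N v) *\<^sub>v z = (om N u v \<cdot>\<^sub>m Bm N u v) *\<^sub>v z" .
qed (use u v in auto)

lemma Am_smult: assumes u: "u \<in> carrier_vec (2*N)" shows "Am N (c \<cdot>\<^sub>v u) = (c*c) \<cdot>\<^sub>m Am N u"
  unfolding Am_def using u by (intro eq_matI) (auto simp: om_smult_left)


lemma one_smult_mat': fixes A :: "complex mat" shows "A \<in> carrier_mat n m \<Longrightarrow> 1 \<cdot>\<^sub>m A = A"
  by (intro eq_matI) auto

lemma smult_smult_mat': fixes A :: "complex mat" shows "A \<in> carrier_mat n m \<Longrightarrow> a \<cdot>\<^sub>m (b \<cdot>\<^sub>m A) = (a * b) \<cdot>\<^sub>m A"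
  by (intro eq_matI) auto

lemma add_minus_cancel_mat: fixes A B :: "complex mat" shows "A \<in> carrier_mat n m \<Longrightarrow> B \<in> carrier_mat n m \<Longrightarrow> (A + B) - A = B"
  by (intro eq_matI) auto

lemma minus_as_add_mat: fixes A B :: "complex mat" shows "A \<in> carrier_mat n m \<Longrightarrow> B \<in> carrier_mat n m \<Longrightarrow> A - B = A + (-1) \<cdot>\<^sub>m B"
  by (intro eq_matI) auto

locale LS =
  fixes N :: nat and L :: "complex mat set"
  assumes sub: "lie_subalgebra (2*N) L" and Lsp: "L \<subseteq> sp N"
begin

lemma LC: "X \<in> L \<Longrightarrow> X \<in> carrier_mat (2*N) (2*N)"
  using sub unfolding lie_subalgebra_def mat_subspace_def by auto

lemma Lsk: "X \<in> L \<Longrightarrow> sk N X" using Lsp sp_sk by auto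

lemma L0: "0\<^sub>m (2*N) (2*N) \<in> L"
  using sub unfolding lie_subalgebra_def mat_subspace_def by auto

lemma Ladd: "X \<in> L \<Longrightarrow> Y \<in> L \<Longrightarrow> X + Y \<in> L"
  using sub unfolding lie_subalgebra_def mat_subspace_def by auto

lemma Lsmult: "X \<in> L \<Longrightarrow> c \<cdot>\<^sub>m X \<in> L"
  using sub unfolding lie_subalgebra_def mat_subspace_def by auto

lemma Lbr: "X \<in> L \<Longrightarrow> Y \<in> L \<Longrightarrow> lie_bracket X Y \<in> L"
  using sub unfolding lie_subalgebra_def by auto

lemma Lminus: "X \<in> L \<Longrightarrow> Y \<in> L \<Longrightarrow> X - Y \<in> L"
  using minus_as_add_mat[OF LC LC] Ladd Lsmult by metis

lemma Lsmult_inv: assumes "c \<cdot>\<^sub>m X \<in> L" "c \<noteq> 0" "X \<in> carrier_mat (2*N) (2*N)" shows "X \<in> L"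
proof -
  have "(1/c) \<cdot>\<^sub>m (c \<cdot>\<^sub>m X) \<in> L" using Lsmult assms by blast
  thus ?thesis using smult_smult_mat'[OF assms(3)] assms(2) one_smult_mat'[OF assms(3)] by simp
qed

lemma partner:
  assumes u: "u \<in> carrier_vec (2*N)" and Au: "Am N u \<in> L" and X: "X \<in> L"
    and c0: "om N u (X *\<^sub>v u) \<noteq> 0"
  shows "Am N (X *\<^sub>v u) \<in> L"
proof -
  define x where "x = X *\<^sub>v u"
  define z where "z = X *\<^sub>v x"
  define c where "c = om N u x"
  have XC: "X \<in> carrier_mat (2*N) (2*N)" using LC[OF X] .
  have x: "x \<in> carrier_vec (2*N)" unfolding x_def using XC u by (rule mvC)
  have z: "z \<in> carrier_vec (2*N)" unfolding z_def using XC x by (rule mvC)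
  have c: "c \<noteq> 0" using c0 unfolding c_def x_def .
  have Y: "lie_bracket X (Am N u) = Bm N x u" unfolding x_def by (rule br_Am[OF Lsk[OF X] u])
  have YL: "Bm N x u \<in> L" using Lbr[OF X Au] Y by simp
  have Z0: "lie_bracket X (Bm N x u) = Bm N z u + Bm N x x"
    using br_Bm[OF Lsk[OF X] x u] unfolding z_def x_def by simp
  have Z0L: "Bm N z u + Bm N x x \<in> L" using Lbr[OF X YL] Z0 by simp
  have TL: "lie_bracket (Bm N x u) (Bm N z u + Bm N x x) \<in> L" using Lbr[OF YL Z0L] .
  have BuuL: "Bm N u u \<in> L" using Bm_self[OF u] Lsmult[OF Au] by simp
  have a1: "om N x u = - c" using om_antisym[OF x u] unfolding c_def .
  have a2: "om N z u = - om N u z" using om_antisym[OF z u] .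
  have a3: "om N z x = - om N x z" using om_antisym[OF z x] .
  have a4: "om N u u = 0" "om N x x = 0" "om N z z = 0" using om_self u x z by auto
  have key: "lie_bracket (Bm N x u) (Bm N z u + Bm N x x) + ((-2*c) \<cdot>\<^sub>m (Bm N z u + Bm N x x) +
      ((- om N u z) \<cdot>\<^sub>m Bm N x u + (- om N x z) \<cdot>\<^sub>m Bm N u u)) = (-3*c) \<cdot>\<^sub>m Bm N z u"
  proof (rule mat_eq_act[of _ "2*N"])
    fix w :: "complex vec" assume w: "w \<in> carrier_vec (2*N)"
    show "(lie_bracket (Bm N x u) (Bm N z u + Bm N x x) + ((-2*c) \<cdot>\<^sub>m (Bm N z u + Bm N x x) +
      ((- om N u z) \<cdot>\<^sub>m Bm N x u + (- om N x z) \<cdot>\<^sub>m Bm N u u))) *\<^sub>v w = ((-3*c) \<cdot>\<^sub>m Bm N z u) *\<^sub>v w"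
      using u x z w a1 a2 a3 a4
      apply (simp add: add_mat_act[of _ "2*N" "2*N"] smult_mat_act[of _ "2*N" "2*N"] br_act[of _ "2*N"]
          Bm_act om_add_right om_smult_right om_add_left om_smult_left)
      by (rule eq_vecI; simp; (simp add: c_def algebra_simps)?)
  qed simp_all
  have "(-3*c) \<cdot>\<^sub>m Bm N z u \<in> L"
    using key TL Z0L YL BuuL by (metis Ladd Lsmult)
  hence BzuL: "Bm N z u \<in> L" using Lsmult_inv c by simp
  have "Bm N x x \<in> L" using Lminus[OF Z0L BzuL] add_minus_cancel_mat[of "Bm N z u" "2*N" "2*N" "Bm N x x"] by simp
  hence "(1/2) \<cdot>\<^sub>m (2 \<cdot>\<^sub>m Am N x) \<in> L" using Bm_self[OF x] Lsmult by simp
  thus ?thesis unfolding x_def[symmetric] using smult_smult_mat'[of "Am N x" "2*N" "2*N"] one_smult_mat'[of "Am N x" "2*N" "2*N"] by simp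
qed

end




lemma Bm_add_right: assumes "x \<in> carrier_vec (2*N)" "y \<in> carrier_vec (2*N)" "z \<in> carrier_vec (2*N)"
  shows "Bm N x (y + z) = Bm N x y + Bm N x z"
  apply (rule eq_matI) using assms apply (simp_all add: Bm_def om_add_left)
  by (simp add: algebra_simps)

lemma Bm_smult_right: assumes "x \<in> carrier_vec (2*N)" "y \<in> carrier_vec (2*N)"
  shows "Bm N x (c \<cdot>\<^sub>v y) = c \<cdot>\<^sub>m Bm N x y"
  apply (rule eq_matI) using assms apply (simp_all add: Bm_def om_smult_left)
  by (simp add: algebra_simps)

lemma Bm_zero_right: assumes "x \<in> carrier_vec (2*N)"
  shows "Bm N x (0\<^sub>v (2*N)) = 0\<^sub>m (2*N) (2*N)"
  apply (rule eq_matI) using assms by (simp_all add: Bm_def om_zero_left)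

context LS begin

lemma BL_comb: assumes a: "a \<in> carrier_vec (2*N)" and y: "y1 \<in> carrier_vec (2*N)" "y2 \<in> carrier_vec (2*N)" "y3 \<in> carrier_vec (2*N)"
  and B: "Bm N a y1 \<in> L" "Bm N a y2 \<in> L" "Bm N a y3 \<in> L"
  shows "Bm N a (c1 \<cdot>\<^sub>v y1 + c2 \<cdot>\<^sub>v y2 + y3) \<in> L"
proof -
  have "Bm N a (c1 \<cdot>\<^sub>v y1 + c2 \<cdot>\<^sub>v y2 + y3) = c1 \<cdot>\<^sub>m Bm N a y1 + c2 \<cdot>\<^sub>m Bm N a y2 + Bm N a y3"
    using a y by (simp add: Bm_add_right Bm_smult_right assoc_add_mat[of _ "2*N" "2*N"])
  thus ?thesis using B by (simp add: Ladd Lsmult)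
qed

lemma zero_smult_vec': "v \<in> carrier_vec n \<Longrightarrow> (0::complex) \<cdot>\<^sub>v v = 0\<^sub>v n"
  by (intro eq_vecI) auto

lemma one_smult_vec': "(1::complex) \<cdot>\<^sub>v v = v"
  by (intro eq_vecI) auto

lemma add_zero_mat': fixes A :: "complex mat" shows "A \<in> carrier_mat n m \<Longrightarrow> A + 0\<^sub>m n m = A"
  by (intro eq_matI) auto

lemma Bm_smult_left: assumes "x \<in> carrier_vec (2*N)" "y \<in> carrier_vec (2*N)"
  shows "Bm N (c \<cdot>\<^sub>v x) y = c \<cdot>\<^sub>m Bm N x y"
  using Bm_smult_right[OF assms(2,1)] Bm_sym by metis

end


definition piv :: "nat \<Rightarrow> complex vec \<Rightarrow> complex vec \<Rightarrow> complex vec \<Rightarrow> complex vec" where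
  "piv N u v y = (- om N y v) \<cdot>\<^sub>v u + (- om N u y) \<cdot>\<^sub>v v + y"

locale SL2 = LS +
  fixes u v :: "complex vec"
  assumes u: "u \<in> carrier_vec (2*N)" and v: "v \<in> carrier_vec (2*N)"
    and Au: "Am N u \<in> L" and Av: "Am N v \<in> L" and uv: "om N u v = 1"
begin

lemma vu: "om N v u = -1" using om_antisym[OF v u] uv by simp
lemma uu: "om N u u = 0" using om_self[OF u] .
lemma vv: "om N v v = 0" using om_self[OF v] .

lemma Huv: "Bm N u v \<in> L"
  using Lbr[OF Au Av] br_AA[OF u v] uv one_smult_mat'[of "Bm N u v" "2*N" "2*N"] by simp
lemma Buu: "Bm N u u \<in> L" using Bm_self[OF u] Lsmult[OF Au] by simp
lemma Bvv: "Bm N v v \<in> L" using Bm_self[OF v] Lsmult[OF Av] by simp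
lemma Hvu: "Bm N v u \<in> L" using Huv Bm_sym by metis

lemma pi_carrier: "y \<in> carrier_vec (2*N) \<Longrightarrow> piv N u v y \<in> carrier_vec (2*N)"
  unfolding piv_def using u v by simp

lemma pi_u: "y \<in> carrier_vec (2*N) \<Longrightarrow> om N u (piv N u v y) = 0"
  unfolding piv_def using u v uv uu by (simp add: om_add_right om_smult_right)

lemma pi_v: "y \<in> carrier_vec (2*N) \<Longrightarrow> om N v (piv N u v y) = 0"
  unfolding piv_def using u v vu vv om_antisym[of v N y] by (simp add: om_add_right om_smult_right)

lemma pi_decomp: "y \<in> carrier_vec (2*N) \<Longrightarrow> y = (om N y v) \<cdot>\<^sub>v u + (om N u y) \<cdot>\<^sub>v v + piv N u v y"
  unfolding piv_def using u v by (intro eq_vecI) auto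

lemma BL_pi: assumes a: "a \<in> carrier_vec (2*N)" and y: "y \<in> carrier_vec (2*N)"
  and "Bm N a u \<in> L" "Bm N a v \<in> L" "Bm N a y \<in> L"
  shows "Bm N a (piv N u v y) \<in> L"
  unfolding piv_def using BL_comb[OF a u v y] assms by simp

lemma BL_unpi: assumes a: "a \<in> carrier_vec (2*N)" and y: "y \<in> carrier_vec (2*N)"
  and "Bm N a u \<in> L" "Bm N a v \<in> L" "Bm N a (piv N u v y) \<in> L"
  shows "Bm N a y \<in> L"
  using BL_comb[OF a u v pi_carrier[OF y]] assms pi_decomp[OF y] by metis

lemma F2: assumes q: "q \<in> carrier_vec (2*N)" and "om N u q = 0" and "Bm N v q \<in> L"
  shows "Bm N u q \<in> L"
proof -
  have "lie_bracket (Am N u) (Bm N v q) = Bm N (Am N u *\<^sub>v v) q + Bm N v (Am N u *\<^sub>v q)"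
    using br_Bm[OF Lsk[OF Au] v q] .
  also have "\<dots> = Bm N u q"
    using u v q assms(2) uv by (simp add: Am_act one_smult_vec' zero_smult_vec'[OF u] Bm_zero_right add_zero_mat'[of _ "2*N" "2*N"])
  finally show ?thesis using Lbr[OF Au assms(3)] by simp
qed

lemma F2': assumes w: "w \<in> carrier_vec (2*N)" and "om N v w = 0" and "Bm N u w \<in> L"
  shows "Bm N v w \<in> L"
proof -
  have "lie_bracket (Am N v) (Bm N u w) = Bm N (Am N v *\<^sub>v u) w + Bm N u (Am N v *\<^sub>v w)"
    using br_Bm[OF Lsk[OF Av] u w] .
  also have "\<dots> = (-1) \<cdot>\<^sub>m Bm N v w"
    using u v w assms(2) vu by (simp add: Am_act zero_smult_vec'[OF v] Bm_zero_right add_zero_mat'[of _ "2*N" "2*N"] Bm_smult_left)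
  finally have "(-1) \<cdot>\<^sub>m Bm N v w \<in> L" using Lbr[OF Av assms(3)] by simp
  thus ?thesis using Lsmult_inv[of "-1"] by simp
qed

lemma F3: assumes p: "p \<in> carrier_vec (2*N)" and w: "w \<in> carrier_vec (2*N)"
  and pv: "om N p v = 0" and uw: "om N u w = 0" and "Bm N u p \<in> L" "Bm N v w \<in> L"
  shows "Bm N p w \<in> L"
proof -
  have e1: "Bm N u p *\<^sub>v v = p" using u v p pv uv by (simp add: Bm_act zero_smult_vec'[OF u] one_smult_vec')
  have e2: "Bm N u p *\<^sub>v w = om N p w \<cdot>\<^sub>v u" using u w p uw by (simp add: Bm_act zero_smult_vec'[OF p])
  have "lie_bracket (Bm N u p) (Bm N v w) = Bm N p w + om N p w \<cdot>\<^sub>m Bm N v u"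
    using br_Bm[OF Lsk[OF assms(5)] v w] e1 e2 u v by (simp add: Bm_smult_right)
  hence "Bm N p w = lie_bracket (Bm N u p) (Bm N v w) - om N p w \<cdot>\<^sub>m Bm N v u"
    using add_minus_cancel_mat[of "Bm N p w" "2*N" "2*N" "om N p w \<cdot>\<^sub>m Bm N v u"]
    by (metis Bm_carrier smult_carrier_mat add_minus_cancel_mat comm_add_mat)
  thus ?thesis using Lminus[OF Lbr[OF assms(5,6)] Lsmult[OF Hvu]] by simp
qed


lemma irr_use: assumes "irreducible_action n L" "vec_subspace n W" "\<forall>A\<in>L. \<forall>w\<in>W. A *\<^sub>v w \<in> W"
  shows "W = {0\<^sub>v n} \<or> W = carrier_vec n"
proof -
  have "\<forall>W. vec_subspace n W \<and> (\<forall>A\<in>L. \<forall>w\<in>W. A *\<^sub>v w \<in> W) \<longrightarrow> W = {0\<^sub>v n} \<or> W = carrier_vec n"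
    using assms(1) unfolding irreducible_action_def by (rule conjunct2)
  hence "vec_subspace n W \<and> (\<forall>A\<in>L. \<forall>w\<in>W. A *\<^sub>v w \<in> W) \<longrightarrow> W = {0\<^sub>v n} \<or> W = carrier_vec n"
    by (rule spec)
  thus ?thesis using assms(2,3) by blast
qed

lemma u_nz: "u \<noteq> 0\<^sub>v (2*N)" using uv om_zero_left[OF v] by auto

lemma K_inv: assumes X: "X \<in> L" and x: "x \<in> carrier_vec (2*N)" and Bx: "Bm N u x \<in> L"
  shows "Bm N u (X *\<^sub>v x) \<in> L"
proof -
  have XC: "X \<in> carrier_mat (2*N) (2*N)" using LC[OF X] .
  have Xu: "X *\<^sub>v u \<in> carrier_vec (2*N)" and Xv: "X *\<^sub>v v \<in> carrier_vec (2*N)"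
    using XC u v by (auto intro: mvC)
  define w where "w = piv N u v x"
  have w: "w \<in> carrier_vec (2*N)" unfolding w_def using pi_carrier[OF x] .
  have uw: "om N u w = 0" and vw: "om N v w = 0" unfolding w_def using pi_u[OF x] pi_v[OF x] by auto
  have Buw: "Bm N u w \<in> L" unfolding w_def using BL_pi[OF u x Buu Huv Bx] .
  have Bvw: "Bm N v w \<in> L" using F2'[OF w vw Buw] .
  have BuXu: "Bm N u (X *\<^sub>v u) \<in> L" using Lbr[OF X Au] br_Am[OF Lsk[OF X] u] Bm_sym by metis
  have BvXv: "Bm N v (X *\<^sub>v v) \<in> L" using Lbr[OF X Av] br_Am[OF Lsk[OF X] v] Bm_sym by metis
  define q where "q = piv N u v (X *\<^sub>v v)"
  have q: "q \<in> carrier_vec (2*N)" unfolding q_def using pi_carrier[OF Xv] .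
  have Bvq: "Bm N v q \<in> L" unfolding q_def using BL_pi[OF v Xv Hvu Bvv BvXv] .
  have Buq: "Bm N u q \<in> L" using F2[OF q _ Bvq] pi_u[OF Xv] unfolding q_def by simp
  have BuXv: "Bm N u (X *\<^sub>v v) \<in> L" using BL_unpi[OF u Xv Buu Huv] Buq unfolding q_def by simp
  define p where "p = piv N u v (X *\<^sub>v u)"
  have p: "p \<in> carrier_vec (2*N)" unfolding p_def using pi_carrier[OF Xu] .
  have Bup: "Bm N u p \<in> L" unfolding p_def using BL_pi[OF u Xu Buu Huv BuXu] .
  have pv: "om N p v = 0" using pi_v[OF Xu] om_antisym[OF p v] unfolding p_def by simp
  have Bpw: "Bm N p w \<in> L" using F3[OF p w pv uw Bup Bvw] .
  have BwXu: "Bm N w (X *\<^sub>v u) \<in> L"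
    using BL_unpi[OF w Xu] Buw Bvw Bpw Bm_sym unfolding p_def by metis
  have br: "lie_bracket X (Bm N u w) = Bm N (X *\<^sub>v u) w + Bm N u (X *\<^sub>v w)"
    using br_Bm[OF Lsk[OF X] u w] .
  have "Bm N u (X *\<^sub>v w) = lie_bracket X (Bm N u w) - Bm N (X *\<^sub>v u) w"
    unfolding br by (rule add_minus_cancel_mat[symmetric]) auto
  hence BuXw: "Bm N u (X *\<^sub>v w) \<in> L"
    using Lminus[OF Lbr[OF X Buw]] BwXu Bm_sym by metis
  have "X *\<^sub>v x = X *\<^sub>v ((om N x v) \<cdot>\<^sub>v u + (om N u x) \<cdot>\<^sub>v v + w)"
    using pi_decomp[OF x] unfolding w_def by simp
  also have "\<dots> = (om N x v) \<cdot>\<^sub>v (X *\<^sub>v u) + (om N u x) \<cdot>\<^sub>v (X *\<^sub>v v) + X *\<^sub>v w"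
    using XC u v w Xu Xv mvC[OF XC w] by (simp add: mult_add_distrib_mat_vec[of _ "2*N" "2*N"] mult_mat_vec[of _ "2*N" "2*N"] assoc_add_vec[of _ "2*N"])
  finally show ?thesis using BL_comb[OF u Xu Xv mvC[OF XC w] BuXu BuXv BuXw] by simp
qed

lemma K_all: assumes irr: "irreducible_action (2*N) L"
  shows "\<forall>x \<in> carrier_vec (2*N). Bm N u x \<in> L"
proof -
  define K where "K = {x \<in> carrier_vec (2*N). Bm N u x \<in> L}"
  have sub: "vec_subspace (2*N) K"
    unfolding vec_subspace_def K_def
  proof (intro conjI ballI allI)
    show "0\<^sub>v (2*N) \<in> {x \<in> carrier_vec (2 * N). Bm N u x \<in> L}" using Bm_zero_right[OF u] L0 by simp
    fix a b assume a: "a \<in> {x \<in> carrier_vec (2 * N). Bm N u x \<in> L}" and b: "b \<in> {x \<in> carrier_vec (2 * N). Bm N u x \<in> L}"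
    thus "a + b \<in> {x \<in> carrier_vec (2 * N). Bm N u x \<in> L}" using Bm_add_right[OF u] Ladd by auto
  next
    fix c a assume a: "a \<in> {x \<in> carrier_vec (2 * N). Bm N u x \<in> L}"
    thus "c \<cdot>\<^sub>v a \<in> {x \<in> carrier_vec (2 * N). Bm N u x \<in> L}" using Bm_smult_right[OF u] Lsmult by auto
  qed auto
  have inv: "\<forall>A\<in>L. \<forall>w\<in>K. A *\<^sub>v w \<in> K"
  proof (intro ballI)
    fix A w assume A: "A \<in> L" and w: "w \<in> K"
    thus "A *\<^sub>v w \<in> K" unfolding K_def using K_inv[OF A] mvC[OF LC[OF A]] by auto
  qed
  have "K = {0\<^sub>v (2*N)} \<or> K = carrier_vec (2*N)"
    using irr_use[OF irr sub inv] .
  moreover have "u \<in> K" unfolding K_def using u Buu by simp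
  ultimately have "K = carrier_vec (2*N)" using u_nz by auto
  thus ?thesis unfolding K_def by auto
qed

lemma E_all: assumes irr: "irreducible_action (2*N) L"
  shows "\<forall>x \<in> carrier_vec (2*N). \<forall>y \<in> carrier_vec (2*N). Bm N x y \<in> L"
proof -
  define E where "E = {y \<in> carrier_vec (2*N). \<forall>x \<in> carrier_vec (2*N). Bm N x y \<in> L}"
  have sub: "vec_subspace (2*N) E"
    unfolding vec_subspace_def E_def
  proof (intro conjI ballI allI)
    show "0\<^sub>v (2*N) \<in> {y \<in> carrier_vec (2*N). \<forall>x \<in> carrier_vec (2*N). Bm N x y \<in> L}" using Bm_zero_right L0 by simp
    fix a b assume a: "a \<in> {y \<in> carrier_vec (2*N). \<forall>x \<in> carrier_vec (2*N). Bm N x y \<in> L}"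
      and b: "b \<in> {y \<in> carrier_vec (2*N). \<forall>x \<in> carrier_vec (2*N). Bm N x y \<in> L}"
    thus "a + b \<in> {y \<in> carrier_vec (2*N). \<forall>x \<in> carrier_vec (2*N). Bm N x y \<in> L}" using Bm_add_right Ladd by auto
  next
    fix c a assume a: "a \<in> {y \<in> carrier_vec (2*N). \<forall>x \<in> carrier_vec (2*N). Bm N x y \<in> L}"
    thus "c \<cdot>\<^sub>v a \<in> {y \<in> carrier_vec (2*N). \<forall>x \<in> carrier_vec (2*N). Bm N x y \<in> L}" using Bm_smult_right Lsmult by auto
  qed auto
  have inv: "\<forall>A\<in>L. \<forall>y\<in>E. A *\<^sub>v y \<in> E"
  proof (intro ballI)
    fix X y assume X: "X \<in> L" and y: "y \<in> E"
    have yc: "y \<in> carrier_vec (2*N)" using y unfolding E_def by auto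
    have XC: "X \<in> carrier_mat (2*N) (2*N)" using LC[OF X] .
    have "Bm N x (X *\<^sub>v y) \<in> L" if x: "x \<in> carrier_vec (2*N)" for x
    proof -
      have br: "lie_bracket X (Bm N x y) = Bm N (X *\<^sub>v x) y + Bm N x (X *\<^sub>v y)"
        using br_Bm[OF Lsk[OF X] x yc] .
      have "Bm N x (X *\<^sub>v y) = lie_bracket X (Bm N x y) - Bm N (X *\<^sub>v x) y"
        unfolding br by (rule add_minus_cancel_mat[symmetric]) auto
      moreover have "Bm N x y \<in> L" "Bm N (X *\<^sub>v x) y \<in> L"
        using y x mvC[OF XC x] unfolding E_def by auto
      ultimately show ?thesis using Lminus[OF Lbr[OF X \<open>Bm N x y \<in> L\<close>] \<open>Bm N (X *\<^sub>v x) y \<in> L\<close>] by simp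
    qed
    thus "X *\<^sub>v y \<in> E" unfolding E_def using mvC[OF XC yc] by auto
  qed
  have "E = {0\<^sub>v (2*N)} \<or> E = carrier_vec (2*N)"
    using irr_use[OF irr sub inv] .
  moreover have "u \<in> E" unfolding E_def using u K_all[OF irr] Bm_sym[of N _ u] by auto
  ultimately have "E = carrier_vec (2*N)" using u_nz by auto
  thus ?thesis unfolding E_def by auto
qed

end




lemma om_unit_left: assumes y: "y \<in> carrier_vec (2*N)" and j: "j < 2*N"
  shows "om N (unit_vec (2*N) j) y = (if j < N then y$(j+N) else - y$(j-N))"
proof (cases "j < N")
  case True
  have "om N (unit_vec (2*N) j) y = (\<Sum>i<N. unit_vec (2*N) j $ i * y$(i+N) - unit_vec (2*N) j $ (i+N) * y$i)"
    using y j by (simp add: om_explicit)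
  also have "\<dots> = (\<Sum>i<N. if i = j then y$(i+N) else 0)"
    using True j by (intro sum.cong) auto
  also have "\<dots> = y$(j+N)" using True by simp
  finally show ?thesis using True by simp
next
  case False
  have "om N (unit_vec (2*N) j) y = (\<Sum>i<N. unit_vec (2*N) j $ i * y$(i+N) - unit_vec (2*N) j $ (i+N) * y$i)"
    using y j by (simp add: om_explicit)
  also have "\<dots> = (\<Sum>i<N. if i = j - N then - y$i else 0)"
    using False j by (intro sum.cong) auto
  also have "\<dots> = - y$(j-N)" using False j by simp
  finally show ?thesis using False by simp
qed

definition fv :: "nat \<Rightarrow> nat \<Rightarrow> complex vec" where
  "fv N j = (if N \<le> j then unit_vec (2*N) (j-N) else (-1) \<cdot>\<^sub>v unit_vec (2*N) (j+N))"

lemma fv_carrier[simp]: "fv N j \<in> carrier_vec (2*N)" unfolding fv_def by simp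

lemma om_fv: assumes j: "j < 2*N" and b: "b < 2*N"
  shows "om N (fv N j) (unit_vec (2*N) b) = (if j = b then 1 else 0)"
proof (cases "N \<le> j")
  case True
  then show ?thesis unfolding fv_def using j b by (auto simp: om_unit_left)
next
  case False
  then show ?thesis unfolding fv_def using j b by (auto simp: om_smult_left om_unit_left)
qed

lemma fv_index_lo: assumes a: "a < N" and j: "j < 2*N"
  shows "fv N j $ a = (if j = a + N then 1 else 0)"
  unfolding fv_def using a j by auto

lemma fv_index_hi: assumes a: "N \<le> a" "a < 2*N" and j: "j < 2*N"
  shows "fv N j $ a = (if j = a - N then -1 else 0)"
  unfolding fv_def using a j by auto

context LS begin

lemma sp_in_L: assumes allB: "\<And>x y. x \<in> carrier_vec (2*N) \<Longrightarrow> y \<in> carrier_vec (2*N) \<Longrightarrow> Bm N x y \<in> L"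
  and M: "M \<in> sp N"
  shows "M \<in> L"
proof -
  have MC: "M \<in> carrier_mat (2*N) (2*N)" using M unfolding sp_def by auto
  have Msk: "sk N M" using sp_sk[OF M] .
  define T where "T j = (1/2) \<cdot>\<^sub>m Bm N (M *\<^sub>v unit_vec (2*N) j) (fv N j)" for j
  have TL: "T j \<in> L" for j unfolding T_def using allB[OF mvC[OF MC] fv_carrier] Lsmult by simp
  define PS where "PS k = mat (2*N) (2*N) (\<lambda>(a,b). \<Sum>j<k. T j $$ (a,b))" for k
  have PSL: "PS k \<in> L" for k
  proof (induction k)
    case 0
    have "PS 0 = 0\<^sub>m (2*N) (2*N)" unfolding PS_def by (intro eq_matI) auto
    then show ?case using L0 by simp
  next
    case (Suc k)
    have "PS (Suc k) = PS k + T k" unfolding PS_def T_def by (intro eq_matI) auto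
    then show ?case using Ladd[OF Suc TL] by simp
  qed
  have "PS (2*N) = M"
  proof (rule eq_matI)
    fix a b assume ab: "a < dim_row M" "b < dim_col M"
    hence a: "a < 2*N" and b: "b < 2*N" using MC by auto
    have Tab: "T j $$ (a,b) = (1/2) * (M $$ (a,j) * (if j = b then 1 else 0) + fv N j $ a * om N (M *\<^sub>v unit_vec (2*N) j) (unit_vec (2*N) b))"
      if j: "j < 2*N" for j
      unfolding T_def Bm_def using a b j MC by (simp add: om_fv)
    have "PS (2*N) $$ (a,b) = (\<Sum>j<2*N. T j $$ (a,b))" unfolding PS_def using a b by simp
    also have "\<dots> = (\<Sum>j<2*N. (1/2) * (M $$ (a,j) * (if j = b then 1 else 0)) + (1/2) * (fv N j $ a * om N (M *\<^sub>v unit_vec (2*N) j) (unit_vec (2*N) b)))"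
      by (intro sum.cong) (auto simp: Tab algebra_simps)
    also have "\<dots> = (1/2) * M $$ (a,b) + (\<Sum>j<2*N. (1/2) * (fv N j $ a * om N (M *\<^sub>v unit_vec (2*N) j) (unit_vec (2*N) b)))"
    proof -
      have "(\<Sum>j<2*N. (1/2) * (M $$ (a,j) * (if j = b then 1 else 0))) = (\<Sum>j<2*N. if j = b then (1/2) * M $$ (a,j) else 0)"
        by (intro sum.cong) auto
      also have "\<dots> = (1/2) * M $$ (a,b)" using b by simp
      finally show ?thesis by (simp add: sum.distrib)
    qed
    also have "(\<Sum>j<2*N. (1/2) * (fv N j $ a * om N (M *\<^sub>v unit_vec (2*N) j) (unit_vec (2*N) b))) = (1/2) * M $$ (a,b)"
    proof (cases "a < N")
      case True
      have "(\<Sum>j<2*N. (1/2) * (fv N j $ a * om N (M *\<^sub>v unit_vec (2*N) j) (unit_vec (2*N) b)))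
        = (\<Sum>j<2*N. if j = a + N then (1/2) * om N (M *\<^sub>v unit_vec (2*N) j) (unit_vec (2*N) b) else 0)"
        using True by (intro sum.cong) (auto simp: fv_index_lo)
      also have "\<dots> = (1/2) * om N (M *\<^sub>v unit_vec (2*N) (a+N)) (unit_vec (2*N) b)"
        using True by simp
      also have "om N (M *\<^sub>v unit_vec (2*N) (a+N)) (unit_vec (2*N) b) = - om N (unit_vec (2*N) (a+N)) (M *\<^sub>v unit_vec (2*N) b)"
        using skD[OF Msk, of "unit_vec (2*N) (a+N)" "unit_vec (2*N) b"] by simp
      also have "\<dots> = M $$ (a,b)"
        using True b MC by (simp add: om_unit_left mvC)
      finally show ?thesis .
    next
      case False
      have "(\<Sum>j<2*N. (1/2) * (fv N j $ a * om N (M *\<^sub>v unit_vec (2*N) j) (unit_vec (2*N) b)))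
        = (\<Sum>j<2*N. if j = a - N then - (1/2) * om N (M *\<^sub>v unit_vec (2*N) j) (unit_vec (2*N) b) else 0)"
        using False a by (intro sum.cong) (auto simp: fv_index_hi)
      also have "\<dots> = - (1/2) * om N (M *\<^sub>v unit_vec (2*N) (a-N)) (unit_vec (2*N) b)"
        using False a by simp
      also have "om N (M *\<^sub>v unit_vec (2*N) (a-N)) (unit_vec (2*N) b) = - om N (unit_vec (2*N) (a-N)) (M *\<^sub>v unit_vec (2*N) b)"
        using skD[OF Msk, of "unit_vec (2*N) (a-N)" "unit_vec (2*N) b"] by simp
      also have "- (1/2) * (- om N (unit_vec (2*N) (a-N)) (M *\<^sub>v unit_vec (2*N) b)) = (1/2) * M $$ (a,b)"
      proof -
        have lt: "a - N < N" and eq: "a - N + N = a" using False a by arith+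
        have "om N (unit_vec (2*N) (a-N)) (M *\<^sub>v unit_vec (2*N) b) = (M *\<^sub>v unit_vec (2*N) b) $ (a - N + N)"
          using om_unit_left[OF mvC[OF MC unit_vec_carrier], of "a - N" b] lt by simp
        thus ?thesis unfolding eq using a b MC by simp
      qed
      finally show ?thesis .
    qed
    finally show "PS (2*N) $$ (a,b) = M $$ (a,b)" by simp
  qed (use MC in \<open>auto simp: PS_def\<close>)
  thus ?thesis using PSL by metis
qed

end




lemma (in vec_space) lincomb_two:
  assumes x: "x \<in> carrier_vec n" and y: "y \<in> carrier_vec n" and xy: "x \<noteq> y"
  shows "lincomb a {x, y} = a x \<cdot>\<^sub>v x + a y \<cdot>\<^sub>v y"
proof -
  have e1: "lincomb a ({} \<union> {x}) = a x \<cdot>\<^sub>v x + lincomb a {}"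
    by (rule lincomb_insert) (use x in auto)
  have e0: "lincomb a {} = 0\<^sub>v n" unfolding lincomb_def by simp
  have e2: "lincomb a ({x} \<union> {y}) = a y \<cdot>\<^sub>v y + lincomb a {x}"
    by (rule lincomb_insert) (use x y xy in auto)
  have "lincomb a {x, y} = a y \<cdot>\<^sub>v y + (a x \<cdot>\<^sub>v x + 0\<^sub>v n)" using e0 e1 e2 by (simp add: insert_commute)
  also have "\<dots> = a x \<cdot>\<^sub>v x + a y \<cdot>\<^sub>v y" using x y by (intro eq_vecI) auto
  finally show ?thesis .
qed

lemma (in vec_space) rank1_cols:
  assumes A: "A \<in> carrier_mat n nc" and r: "rank A = 1"
  shows "\<exists>x \<in> carrier_vec n. x \<noteq> 0\<^sub>v n \<and> (\<forall>j < nc. \<exists>c. col A j = c \<cdot>\<^sub>v x)"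
proof -
  have "A \<noteq> 0\<^sub>m n nc" using r rank_0I by auto
  then obtain j0 where j0: "j0 < nc" "col A j0 \<noteq> 0\<^sub>v n"
  proof -
    assume h: "\<And>j0. j0 < nc \<Longrightarrow> col A j0 \<noteq> 0\<^sub>v n \<Longrightarrow> thesis"
    show thesis
    proof (rule ccontr)
      assume "\<not> thesis"
      hence z: "\<And>j. j < nc \<Longrightarrow> col A j = 0\<^sub>v n" using h by blast
      have "A = 0\<^sub>m n nc"
      proof (rule eq_matI)
        fix i j assume "i < dim_row (0\<^sub>m n nc)" "j < dim_col (0\<^sub>m n nc)"
        hence ij: "i < n" "j < nc" by auto
        have "A $$ (i,j) = col A j $ i" using A ij by simp
        thus "A $$ (i,j) = 0\<^sub>m n nc $$ (i,j)" using z[OF ij(2)] ij by simp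
      qed (use A in auto)
      thus False using \<open>A \<noteq> 0\<^sub>m n nc\<close> by simp
    qed
  qed
  define x where "x = col A j0"
  have x: "x \<in> carrier_vec n" unfolding x_def using A j0 by simp
  have xnz: "x \<noteq> 0\<^sub>v n" unfolding x_def using j0 by simp
  have "\<exists>c. col A j = c \<cdot>\<^sub>v x" if j: "j < nc" for j
  proof (rule ccontr)
    assume nc: "\<not> (\<exists>c. col A j = c \<cdot>\<^sub>v x)"
    define y where "y = col A j"
    have y: "y \<in> carrier_vec n" unfolding y_def using A j by simp
    have xy: "x \<noteq> y" using nc one_smult_vec unfolding y_def by metis
    have li: "lin_indpt {x, y}"
    proof (rule finite_lin_indpt2)
      fix a assume "True" and lc: "lincomb a {x, y} = 0\<^sub>v n"
      hence lc': "a x \<cdot>\<^sub>v x + a y \<cdot>\<^sub>v y = 0\<^sub>v n" using lincomb_two[OF x y xy] by simp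
      have ay: "a y = 0"
      proof (rule ccontr)
        assume ay: "a y \<noteq> 0"
        have "y = (- a x / a y) \<cdot>\<^sub>v x"
        proof (rule eq_vecI)
          fix i assume "i < dim_vec ((- a x / a y) \<cdot>\<^sub>v x)"
          hence i: "i < n" using x by simp
          have "a x * x $ i + a y * y $ i = 0" using arg_cong[OF lc', of "\<lambda>v. v $ i"] i x y by simp
          hence "a y * y $ i = - (a x * x $ i)" by (metis add.commute add_eq_0_iff)
          thus "y $ i = ((- a x / a y) \<cdot>\<^sub>v x) $ i" using i x ay by (simp add: field_simps)
        qed (use x y in auto)
        thus False using nc unfolding y_def by blast
      qed
      have ax: "a x = 0"
      proof (rule ccontr)
        assume ax: "a x \<noteq> 0"
        obtain i where i: "i < n" "x $ i \<noteq> 0" using xnz x by (metis carrier_vecD eq_vecI index_zero_vec(1) index_zero_vec(2))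
        have "a x * x $ i + a y * y $ i = 0" using arg_cong[OF lc', of "\<lambda>v. v $ i"] i x y by simp
        thus False using ay ax i by simp
      qed
      show "\<forall>v\<in>{x, y}. a v = 0" using ax ay by simp
    qed (use x y in auto)
    have sub: "{x, y} \<subseteq> set (cols A)" unfolding x_def y_def using j j0 A
      by (auto simp: cols_def)
    have "card {x, y} \<le> rank A" using rank_ge_card_indpt[OF A sub li] .
    thus False using xy r by simp
  qed
  thus ?thesis using x xnz by blast
qed


lemma om_nondeg_ex: assumes x: "x \<in> carrier_vec (2*N)" and nz: "x \<noteq> 0\<^sub>v (2*N)"
  shows "\<exists>b \<in> carrier_vec (2*N). om N x b \<noteq> 0"
  using om_nondeg[OF x] nz by blast

lemma rank1_Am: assumes AC: "A \<in> carrier_mat (2*N) (2*N)" and Ask: "sk N A"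
  and r: "vec_space.rank (2*N) A = 1"
  shows "\<exists>u \<in> carrier_vec (2*N). u \<noteq> 0\<^sub>v (2*N) \<and> A = Am N u"
proof -
  obtain x where x: "x \<in> carrier_vec (2*N)" and xnz: "x \<noteq> 0\<^sub>v (2*N)"
    and cx: "\<forall>j < 2*N. \<exists>c. col A j = c \<cdot>\<^sub>v x"
    using vec_space.rank1_cols[OF AC r] by blast
  have "\<forall>j. \<exists>c. j < 2*N \<longrightarrow> col A j = c \<cdot>\<^sub>v x" using cx by blast
  then obtain c where c: "\<And>j. j < 2*N \<Longrightarrow> col A j = c j \<cdot>\<^sub>v x" by metis
  define phi where "phi z = (\<Sum>j<2*N. c j * z $ j)" for z :: "complex vec"
  have Aact: "A *\<^sub>v z = phi z \<cdot>\<^sub>v x" if z: "z \<in> carrier_vec (2*N)" for z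
  proof (rule eq_vecI)
    fix i assume "i < dim_vec (phi z \<cdot>\<^sub>v x)"
    hence i: "i < 2*N" using x by simp
    have "(A *\<^sub>v z) $ i = (\<Sum>j<2*N. A $$ (i,j) * z $ j)"
      using AC i z by (simp add: scalar_prod_def lessThan_atLeast0)
    also have "\<dots> = (\<Sum>j<2*N. (c j * x $ i) * z $ j)"
    proof (intro sum.cong refl)
      fix j assume "j \<in> {..<2*N}"
      hence j: "j < 2*N" by simp
      have "A $$ (i,j) = col A j $ i" using AC i j by simp
      also have "\<dots> = c j * x $ i" using c[OF j] i x by simp
      finally show "A $$ (i,j) * z $ j = (c j * x $ i) * z $ j" by simp
    qed
    also have "\<dots> = phi z * x $ i" unfolding phi_def sum_distrib_right by (intro sum.cong) auto
    finally show "(A *\<^sub>v z) $ i = (phi z \<cdot>\<^sub>v x) $ i" using i x by simp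
  qed (use AC x in simp)
  obtain b0 where b0: "b0 \<in> carrier_vec (2*N)" "om N x b0 \<noteq> 0" using om_nondeg_ex[OF x xnz] by blast
  define lam where "lam = phi b0 / om N x b0"
  have phi_eq: "phi a = lam * om N x a" if a: "a \<in> carrier_vec (2*N)" for a
  proof -
    have "om N (A *\<^sub>v a) b0 = - om N a (A *\<^sub>v b0)" using skD[OF Ask a b0(1)] by simp
    hence "phi a * om N x b0 = - (phi b0 * om N a x)"
      using Aact[OF a] Aact[OF b0(1)] a b0 x by (simp add: om_smult_left om_smult_right)
    also have "\<dots> = phi b0 * om N x a" using om_antisym[OF a x] by simp
    finally show ?thesis unfolding lam_def using b0(2) by (simp add: field_simps)
  qed
  have Aeq: "A = lam \<cdot>\<^sub>m Am N x"
  proof (rule mat_eq_act[of _ "2*N"])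
    fix z :: "complex vec" assume z: "z \<in> carrier_vec (2*N)"
    show "A *\<^sub>v z = (lam \<cdot>\<^sub>m Am N x) *\<^sub>v z"
      using Aact[OF z] phi_eq[OF z] x z by (simp add: smult_mat_act[of _ "2*N" "2*N"] Am_act smult_smult_assoc)
  qed (use AC in auto)
  have lnz: "lam \<noteq> 0"
  proof
    assume "lam = 0"
    hence "A = 0\<^sub>m (2*N) (2*N)" using Aeq by (intro eq_matI) auto
    thus False using r vec_space.rank_0I[where 'a=complex, of "2*N" "2*N"] by simp
  qed
  define s where "s = csqrt lam"
  have ss: "s * s = lam" unfolding s_def using power2_csqrt[of lam] by (simp add: power2_eq_square)
  have snz: "s \<noteq> 0" using ss lnz by auto
  define u where "u = s \<cdot>\<^sub>v x"
  have u: "u \<in> carrier_vec (2*N)" unfolding u_def using x by simp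
  have unz: "u \<noteq> 0\<^sub>v (2*N)"
  proof
    assume "u = 0\<^sub>v (2*N)"
    hence "(1/s) \<cdot>\<^sub>v u = 0\<^sub>v (2*N)" by (intro eq_vecI) auto
    moreover have "(1/s) \<cdot>\<^sub>v u = x" unfolding u_def using snz x by (intro eq_vecI) auto
    ultimately show False using xnz by simp
  qed
  have "Am N u = A" unfolding u_def using Am_smult[OF x] ss Aeq by simp
  thus ?thesis using u unz by blast
qed




lemma pascal_sum:
  fixes c :: "nat \<Rightarrow> complex"
  shows "(\<Sum>i\<le>Suc m. of_nat (Suc m choose i) * c i) =
         (\<Sum>i\<le>m. of_nat (m choose i) * c i) + (\<Sum>i\<le>m. of_nat (m choose i) * c (Suc i))"
proof -
  have A: "(\<Sum>i\<le>Suc m. of_nat (Suc m choose i) * c i) = c 0 + (\<Sum>i\<le>m. of_nat (Suc m choose Suc i) * c (Suc i))"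
    by (subst sum.atMost_Suc_shift) simp
  also have "\<dots> = (c 0 + (\<Sum>i\<le>m. of_nat (m choose Suc i) * c (Suc i))) + (\<Sum>i\<le>m. of_nat (m choose i) * c (Suc i))"
    by (simp add: sum.distrib algebra_simps)
  also have "c 0 + (\<Sum>i\<le>m. of_nat (m choose Suc i) * c (Suc i)) = (\<Sum>i\<le>m. of_nat (m choose i) * c i)"
  proof -
    have "(\<Sum>i\<le>m. of_nat (m choose i) * c i) = (\<Sum>i\<le>Suc m. of_nat (m choose i) * c i)"
      by simp
    also have "\<dots> = c 0 + (\<Sum>i\<le>m. of_nat (m choose Suc i) * c (Suc i))"
      by (subst sum.atMost_Suc_shift) simp
    finally show ?thesis by simp
  qed
  finally show ?thesis .
qed

lemma coeff_extract:
  fixes c :: "nat \<Rightarrow> complex"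
  assumes m: "1 \<le> m" and h: "\<And>t. (\<Sum>i\<le>m. c i * t ^ i) = 0"
  shows "c 1 = 0"
proof -
  define p where "p = (\<Sum>i\<le>m. monom (c i) i)"
  have "poly p t = 0" for t
    unfolding p_def using h[of t] by (simp add: poly_sum poly_monom)
  hence "p = 0" using poly_all_0_iff_0 by blast
  hence "coeff p 1 = 0" by simp
  moreover have "coeff p 1 = c 1" unfolding p_def using m by (simp add: coeff_sum coeff_monom)
  ultimately show ?thesis by simp
qed

lemma move_front:
  assumes sw: "\<And>A X Y B. set (A @ X # Y # B) \<subseteq> S \<Longrightarrow> length (A @ X # Y # B) = n \<Longrightarrow> f (A @ X # Y # B) = f (A @ Y # X # B)"
  shows "set (A @ B @ X # C) \<subseteq> S \<Longrightarrow> length (A @ B @ X # C) = n \<Longrightarrow> f (A @ B @ X # C) = f (A @ X # B @ C)"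
proof (induction B arbitrary: A)
  case Nil
  then show ?case by simp
next
  case (Cons b B)
  have "f (A @ (b # B) @ X # C) = f ((A @ [b]) @ B @ X # C)" by simp
  also have "\<dots> = f ((A @ [b]) @ X # B @ C)" using Cons by (intro Cons.IH) auto
  also have "\<dots> = f (A @ b # X # B @ C)" by simp
  also have "\<dots> = f (A @ X # b # B @ C)" using Cons.prems by (intro sw) auto
  finally show ?case by simp
qed

lemma perm_inv:
  assumes sw: "\<And>A X Y B. set (A @ X # Y # B) \<subseteq> S \<Longrightarrow> length (A @ X # Y # B) = n \<Longrightarrow> f (A @ X # Y # B) = f (A @ Y # X # B)"
  shows "mset P = mset Q \<Longrightarrow> set (A @ P) \<subseteq> S \<Longrightarrow> length (A @ P) = n \<Longrightarrow> f (A @ P) = f (A @ Q)"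
proof (induction P arbitrary: A Q)
  case Nil
  then show ?case by simp
next
  case (Cons x P)
  have "x \<in> set Q" using Cons.prems(1) by (metis list.set_intros(1) set_mset_mset)
  then obtain Q1 Q2 where Q: "Q = Q1 @ x # Q2" by (meson split_list)
  have m: "mset P = mset (Q1 @ Q2)" using Cons.prems(1) Q by simp
  have sQ: "set (A @ Q1 @ x # Q2) \<subseteq> S" using Cons.prems Q by (metis set_append set_mset_mset)
  have lQ: "length (A @ Q1 @ x # Q2) = n" using Cons.prems Q by (metis length_append mset_eq_length)
  have "f (A @ x # P) = f ((A @ [x]) @ P)" by simp
  also have "\<dots> = f ((A @ [x]) @ Q1 @ Q2)" using Cons by (intro Cons.IH[OF m]) auto
  also have "\<dots> = f (A @ x # Q1 @ Q2)" by simp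
  also have "\<dots> = f (A @ Q1 @ x # Q2)" using move_front[where f=f and S=S and n=n, OF sw sQ lQ] by simp
  finally show ?case using Q by simp
qed


lemma polarize:
  fixes G :: "complex mat list \<Rightarrow> complex" and S :: "complex mat set"
  assumes sym: "\<And>P Q. set P \<subseteq> S \<Longrightarrow> length P = n \<Longrightarrow> mset P = mset Q \<Longrightarrow> G P = G Q"
    and addS: "\<And>X Y. X \<in> S \<Longrightarrow> Y \<in> S \<Longrightarrow> X + Y \<in> S"
    and smS: "\<And>X c. X \<in> S \<Longrightarrow> c \<cdot>\<^sub>m X \<in> S"
    and lin_add: "\<And>X Y P. X \<in> S \<Longrightarrow> Y \<in> S \<Longrightarrow> set P \<subseteq> S \<Longrightarrow> Suc (length P) = n \<Longrightarrow>
        G ((X + Y) # P) = G (X # P) + G (Y # P)"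
    and lin_sm: "\<And>X c P. X \<in> S \<Longrightarrow> set P \<subseteq> S \<Longrightarrow> Suc (length P) = n \<Longrightarrow>
        G ((c \<cdot>\<^sub>m X) # P) = c * G (X # P)"
    and D: "\<And>X. X \<in> S \<Longrightarrow> G (replicate n X) = 0"
    and Yz: "Yz \<in> S"
  shows "set P \<subseteq> S \<Longrightarrow> length P = n \<Longrightarrow> G P = 0"
proof -
  have E: "\<And>R. length R + m = n \<Longrightarrow> set R \<subseteq> S \<Longrightarrow> X \<in> S \<Longrightarrow> Y \<in> S \<Longrightarrow>
     G (R @ replicate m (Y + t \<cdot>\<^sub>m X)) =
     (\<Sum>i\<le>m. of_nat (m choose i) * (t ^ i * G (R @ replicate i X @ replicate (m - i) Y)))" for m X Y t
  proof (induction m)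
    case 0
    then show ?case by simp
  next
    case (Suc m R)
    define Z where "Z = Y + t \<cdot>\<^sub>m X"
    have Z: "Z \<in> S" unfolding Z_def using Suc.prems addS smS by blast
    have sR: "set (R @ replicate m Z) \<subseteq> S" using Suc.prems Z by auto
    have lR: "Suc (length (R @ replicate m Z)) = n" using Suc.prems by simp
    define gam where "gam i = G (R @ replicate i X @ replicate (Suc m - i) Y)" for i
    have "G (R @ replicate (Suc m) Z) = G (Z # R @ replicate m Z)"
      by (rule sym) (use Suc.prems Z in auto)
    also have "\<dots> = G (Y # R @ replicate m Z) + t * G (X # R @ replicate m Z)"
      unfolding Z_def using lin_add[OF Suc.prems(4) smS[OF Suc.prems(3)] _ lR[unfolded Z_def]]
        lin_sm[OF Suc.prems(3) _ lR[unfolded Z_def]] sR[unfolded Z_def] by simp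
    also have "G (Y # R @ replicate m Z) = (\<Sum>i\<le>m. of_nat (m choose i) * (t ^ i * gam i))"
    proof -
      have "G ((Y # R) @ replicate m Z) = (\<Sum>i\<le>m. of_nat (m choose i) * (t ^ i * G ((Y # R) @ replicate i X @ replicate (m - i) Y)))"
        unfolding Z_def by (rule Suc.IH) (use Suc.prems in auto)
      also have "\<dots> = (\<Sum>i\<le>m. of_nat (m choose i) * (t ^ i * gam i))"
      proof (intro sum.cong refl)
        fix i assume i: "i \<in> {..m}"
        have "G ((Y # R) @ replicate i X @ replicate (m - i) Y) = gam i"
          unfolding gam_def
        proof (rule sym)
          show "mset ((Y # R) @ replicate i X @ replicate (m - i) Y) = mset (R @ replicate i X @ replicate (Suc m - i) Y)"
            using i by (simp add: Suc_diff_le)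
        qed (use Suc.prems i in auto)
        thus "of_nat (m choose i) * (t ^ i * G ((Y # R) @ replicate i X @ replicate (m - i) Y)) = of_nat (m choose i) * (t ^ i * gam i)"
          by simp
      qed
      finally show ?thesis by simp
    qed
    also have "G (X # R @ replicate m Z) = (\<Sum>i\<le>m. of_nat (m choose i) * (t ^ i * gam (Suc i)))"
    proof -
      have "G ((X # R) @ replicate m Z) = (\<Sum>i\<le>m. of_nat (m choose i) * (t ^ i * G ((X # R) @ replicate i X @ replicate (m - i) Y)))"
        unfolding Z_def by (rule Suc.IH) (use Suc.prems in auto)
      also have "\<dots> = (\<Sum>i\<le>m. of_nat (m choose i) * (t ^ i * gam (Suc i)))"
      proof (intro sum.cong refl)
        fix i assume i: "i \<in> {..m}"
        have "G ((X # R) @ replicate i X @ replicate (m - i) Y) = gam (Suc i)"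
          unfolding gam_def
        proof (rule sym)
          show "mset ((X # R) @ replicate i X @ replicate (m - i) Y) = mset (R @ replicate (Suc i) X @ replicate (Suc m - Suc i) Y)"
            using i by simp
        qed (use Suc.prems i in auto)
        thus "of_nat (m choose i) * (t ^ i * G ((X # R) @ replicate i X @ replicate (m - i) Y)) = of_nat (m choose i) * (t ^ i * gam (Suc i))"
          by simp
      qed
      finally show ?thesis by simp
    qed
    also have "(\<Sum>i\<le>m. of_nat (m choose i) * (t ^ i * gam i)) + t * (\<Sum>i\<le>m. of_nat (m choose i) * (t ^ i * gam (Suc i)))
      = (\<Sum>i\<le>Suc m. of_nat (Suc m choose i) * (t ^ i * gam i))"
      using pascal_sum[of m "\<lambda>i. t ^ i * gam i"] by (simp add: sum_distrib_left algebra_simps)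
    finally show ?case unfolding gam_def Z_def by simp
  qed
  have C: "j \<le> n \<Longrightarrow> \<forall>Q Y. length Q = j \<longrightarrow> set Q \<subseteq> S \<longrightarrow> Y \<in> S \<longrightarrow> G (Q @ replicate (n - j) Y) = 0" for j
  proof (induction j)
    case 0
    then show ?case using D by simp
  next
    case (Suc j)
    show ?case
    proof (intro allI impI)
      fix Q Y assume lQ: "length Q = Suc j" and sQ: "set Q \<subseteq> S" and Y: "Y \<in> S"
      obtain Q0 X where Q: "Q = Q0 @ [X]" using lQ by (metis length_Suc_conv_rev)
      have X: "X \<in> S" and sQ0: "set Q0 \<subseteq> S" and lQ0: "length Q0 = j" using sQ lQ Q by auto
      define m where "m = n - j"
      have m1: "1 \<le> m" unfolding m_def using Suc.prems by simp
      define gam where "gam i = G (Q0 @ replicate i X @ replicate (m - i) Y)" for i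
      have "(\<Sum>i\<le>m. (of_nat (m choose i) * gam i) * t ^ i) = 0" for t
      proof -
        have "G (Q0 @ replicate m (Y + t \<cdot>\<^sub>m X)) = 0"
          using Suc.IH Suc.prems lQ0 sQ0 addS[OF Y smS[OF X]] unfolding m_def by simp
        moreover have "G (Q0 @ replicate m (Y + t \<cdot>\<^sub>m X)) = (\<Sum>i\<le>m. of_nat (m choose i) * (t ^ i * gam i))"
          unfolding gam_def by (rule E) (use lQ0 Suc.prems sQ0 X Y m_def in auto)
        ultimately show ?thesis by (simp add: algebra_simps)
      qed
      hence "of_nat (m choose 1) * gam 1 = 0" using coeff_extract[OF m1, of "\<lambda>i. of_nat (m choose i) * gam i"] by simp
      hence "gam 1 = 0" using m1 by simp
      moreover have "Q @ replicate (n - Suc j) Y = Q0 @ replicate 1 X @ replicate (m - 1) Y"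
        using Q unfolding m_def by simp
      ultimately show "G (Q @ replicate (n - Suc j) Y) = 0" unfolding gam_def by simp
    qed
  qed
  assume "set P \<subseteq> S" "length P = n"
  thus "G P = 0" using C[of n] Yz by auto
qed




fun prodw :: "nat \<Rightarrow> complex mat list \<Rightarrow> complex mat" where
  "prodw n [] = 1\<^sub>m n"
| "prodw n (X # P) = X * prodw n P"

lemma prodw_carrier: "set P \<subseteq> carrier_mat n n \<Longrightarrow> prodw n P \<in> carrier_mat n n"
  by (induction P) auto

lemma prodw_act_cons: assumes "X \<in> carrier_mat n n" "set P \<subseteq> carrier_mat n n" "v \<in> carrier_vec n"
  shows "prodw n (X # P) *\<^sub>v v = X *\<^sub>v (prodw n P *\<^sub>v v)"
  using assms by (simp add: assoc_mult_mat_vec[of _ n n _ n] prodw_carrier)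

lemma prodw_act_append: assumes "set A \<subseteq> carrier_mat n n" "set B \<subseteq> carrier_mat n n" "v \<in> carrier_vec n"
  shows "prodw n (A @ B) *\<^sub>v v = prodw n A *\<^sub>v (prodw n B *\<^sub>v v)"
  using assms
proof (induction A)
  case Nil
  then show ?case using prodw_carrier[OF assms(2)] by (simp add: mvC)
next
  case (Cons X A)
  have "prodw n ((X # A) @ B) *\<^sub>v v = X *\<^sub>v (prodw n (A @ B) *\<^sub>v v)"
    unfolding append_Cons by (rule prodw_act_cons) (use Cons.prems in auto)
  also have "\<dots> = X *\<^sub>v (prodw n A *\<^sub>v (prodw n B *\<^sub>v v))" using Cons by simp
  also have "\<dots> = prodw n (X # A) *\<^sub>v (prodw n B *\<^sub>v v)"
    by (rule prodw_act_cons[symmetric]) (use Cons.prems prodw_carrier[OF Cons.prems(2)] mvC in auto)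
  finally show ?case .
qed

fun adp :: "complex mat \<Rightarrow> nat \<Rightarrow> complex mat \<Rightarrow> complex mat" where
  "adp X 0 M = M"
| "adp X (Suc k) M = lie_bracket X (adp X k M)"

context LS begin

lemma adp_L: "X \<in> L \<Longrightarrow> M \<in> L \<Longrightarrow> adp X k M \<in> L"
  by (induction k) (auto intro: Lbr)

lemma ad_formula:
  assumes X: "X \<in> L" and u: "u \<in> carrier_vec (2*N)" and Au: "Am N u \<in> L"
  shows "w \<in> carrier_vec (2*N) \<Longrightarrow> z \<in> carrier_vec (2*N) \<Longrightarrow>
    om N w (adp X k (Am N u) *\<^sub>v z) = (\<Sum>j\<le>k. of_nat (k choose j) *
      (om N (prodw (2*N) (replicate (k - j) X) *\<^sub>v u) z * om N w (prodw (2*N) (replicate j X) *\<^sub>v u)))"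
proof (induction k arbitrary: w z)
  case 0
  then show ?case using u by (simp add: Am_act om_smult_right)
next
  case (Suc k w z)
  have XC: "X \<in> carrier_mat (2*N) (2*N)" using LC[OF X] .
  define pv where "pv i = prodw (2*N) (replicate i X) *\<^sub>v u" for i
  have pvC: "pv i \<in> carrier_vec (2*N)" for i
  proof -
    have "set (replicate i X) \<subseteq> carrier_mat (2*N) (2*N)" using XC by auto
    thus ?thesis unfolding pv_def using mvC[OF prodw_carrier u] by blast
  qed
  have pvS: "X *\<^sub>v pv i = pv (Suc i)" for i
    unfolding pv_def replicate_Suc by (rule prodw_act_cons[symmetric]) (use XC u in auto)
  define M' where "M' = adp X k (Am N u)"
  have M'L: "M' \<in> L" unfolding M'_def using adp_L[OF X Au] .
  have M'C: "M' \<in> carrier_mat (2*N) (2*N)" using LC[OF M'L] .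
  have Xw: "X *\<^sub>v w \<in> carrier_vec (2*N)" and Xz: "X *\<^sub>v z \<in> carrier_vec (2*N)"
    using XC Suc.prems by (auto intro: mvC)
  have "om N w (adp X (Suc k) (Am N u) *\<^sub>v z) = om N w (X *\<^sub>v (M' *\<^sub>v z)) - om N w (M' *\<^sub>v (X *\<^sub>v z))"
  proof -
    have "adp X (Suc k) (Am N u) = lie_bracket X M'" unfolding M'_def by simp
    thus ?thesis using XC M'C Suc.prems mvC[OF M'C] mvC[OF XC]
      by (simp add: br_act[of _ "2*N"] om_minus_right)
  qed
  also have "\<dots> = - om N (X *\<^sub>v w) (M' *\<^sub>v z) - om N w (M' *\<^sub>v (X *\<^sub>v z))"
    using skD[OF Lsk[OF X] Suc.prems(1) mvC[OF M'C Suc.prems(2)]] by simp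
  also have "om N (X *\<^sub>v w) (M' *\<^sub>v z) = (\<Sum>j\<le>k. of_nat (k choose j) * (om N (pv (k - j)) z * om N (X *\<^sub>v w) (pv j)))"
    unfolding M'_def pv_def using Suc.IH[OF Xw Suc.prems(2)] .
  also have "\<dots> = - (\<Sum>j\<le>k. of_nat (k choose j) * (om N (pv (k - j)) z * om N w (pv (Suc j))))"
  proof -
    have "om N (X *\<^sub>v w) (pv j) = - om N w (pv (Suc j))" for j
      using skD[OF Lsk[OF X] Suc.prems(1) pvC[of j]] pvS[of j] by simp
    thus ?thesis by (simp add: sum_negf[symmetric])
  qed
  also have "om N w (M' *\<^sub>v (X *\<^sub>v z)) = (\<Sum>j\<le>k. of_nat (k choose j) * (om N (pv (k - j)) (X *\<^sub>v z) * om N w (pv j)))"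
    unfolding M'_def pv_def using Suc.IH[OF Suc.prems(1) Xz] .
  also have "\<dots> = - (\<Sum>j\<le>k. of_nat (k choose j) * (om N (pv (Suc (k - j))) z * om N w (pv j)))"
  proof -
    have "om N (pv i) (X *\<^sub>v z) = - om N (pv (Suc i)) z" for i
      using skD[OF Lsk[OF X] pvC[of i] Suc.prems(2)] pvS[of i] by simp
    thus ?thesis by (simp add: sum_negf[symmetric])
  qed
  also have "- (- (\<Sum>j\<le>k. of_nat (k choose j) * (om N (pv (k - j)) z * om N w (pv (Suc j))))) -
     - (\<Sum>j\<le>k. of_nat (k choose j) * (om N (pv (Suc (k - j))) z * om N w (pv j)))
     = (\<Sum>j\<le>Suc k. of_nat (Suc k choose j) * (om N (pv (Suc k - j)) z * om N w (pv j)))"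
  proof -
    have s1: "(\<Sum>j\<le>k. of_nat (k choose j) * (om N (pv (Suc (k - j))) z * om N w (pv j)))
      = (\<Sum>j\<le>k. of_nat (k choose j) * (om N (pv (Suc k - j)) z * om N w (pv j)))"
      by (intro sum.cong refl) (simp add: Suc_diff_le)
    show ?thesis using pascal_sum[of k "\<lambda>j. om N (pv (Suc k - j)) z * om N w (pv j)"] s1 by simp
  qed
  finally show ?case unfolding pv_def by simp
qed

end


definition gw :: "nat \<Rightarrow> complex vec \<Rightarrow> complex mat list \<Rightarrow> complex" where
  "gw N u P = om N u (prodw (2*N) P *\<^sub>v u)"

locale BAD = LS +
  fixes u :: "complex vec"
  assumes u: "u \<in> carrier_vec (2*N)" and Au: "Am N u \<in> L"
    and bad: "\<And>X. X \<in> L \<Longrightarrow> om N u (X *\<^sub>v u) = 0"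
begin

lemma Lset: "set P \<subseteq> L \<Longrightarrow> set P \<subseteq> carrier_mat (2*N) (2*N)" using LC by auto

lemma pwC: "set P \<subseteq> L \<Longrightarrow> prodw (2*N) P *\<^sub>v u \<in> carrier_vec (2*N)"
  using mvC[OF prodw_carrier[OF Lset] u] by blast

lemma g_swap: assumes A: "set A \<subseteq> L" and B: "set B \<subseteq> L" and X: "X \<in> L" and Y: "Y \<in> L"
  shows "gw N u (A @ X # Y # B) = gw N u (A @ Y # X # B) + gw N u (A @ lie_bracket X Y # B)"
proof -
  have XC: "X \<in> carrier_mat (2*N) (2*N)" and YC: "Y \<in> carrier_mat (2*N) (2*N)" using LC X Y by auto
  have AC: "prodw (2*N) A \<in> carrier_mat (2*N) (2*N)" using prodw_carrier[OF Lset[OF A]] .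
  define w where "w = prodw (2*N) B *\<^sub>v u"
  have w: "w \<in> carrier_vec (2*N)" unfolding w_def using pwC[OF B] .
  have e: "prodw (2*N) (A @ Z1 # Z2 # B) *\<^sub>v u = prodw (2*N) A *\<^sub>v (Z1 *\<^sub>v (Z2 *\<^sub>v w))"
    if "Z1 \<in> carrier_mat (2*N) (2*N)" "Z2 \<in> carrier_mat (2*N) (2*N)" for Z1 Z2
  proof -
    have "prodw (2*N) (A @ Z1 # Z2 # B) *\<^sub>v u = prodw (2*N) A *\<^sub>v (prodw (2*N) (Z1 # Z2 # B) *\<^sub>v u)"
      by (rule prodw_act_append) (use Lset[OF A] Lset[OF B] u that in auto)
    also have "prodw (2*N) (Z1 # Z2 # B) *\<^sub>v u = Z1 *\<^sub>v (Z2 *\<^sub>v w)"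
      unfolding w_def using that Lset[OF B] u prodw_carrier[OF Lset[OF B]]
      by (simp add: prodw_act_cons assoc_mult_mat_vec[of _ "2*N" "2*N" _ "2*N"] mult_carrier_mat)
    finally show ?thesis .
  qed
  have e1: "prodw (2*N) (A @ lie_bracket X Y # B) *\<^sub>v u = prodw (2*N) A *\<^sub>v (lie_bracket X Y *\<^sub>v w)"
  proof -
    have "prodw (2*N) (A @ lie_bracket X Y # B) *\<^sub>v u = prodw (2*N) A *\<^sub>v (prodw (2*N) (lie_bracket X Y # B) *\<^sub>v u)"
      by (rule prodw_act_append) (use Lset[OF A] Lset[OF B] u XC YC in auto)
    also have "prodw (2*N) (lie_bracket X Y # B) *\<^sub>v u = lie_bracket X Y *\<^sub>v w"
      unfolding w_def by (rule prodw_act_cons) (use Lset[OF B] u XC YC in auto)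
    finally show ?thesis .
  qed
  have "lie_bracket X Y *\<^sub>v w = X *\<^sub>v (Y *\<^sub>v w) - Y *\<^sub>v (X *\<^sub>v w)"
    using br_act[OF XC YC w] .
  hence "prodw (2*N) A *\<^sub>v (lie_bracket X Y *\<^sub>v w) = prodw (2*N) A *\<^sub>v (X *\<^sub>v (Y *\<^sub>v w)) - prodw (2*N) A *\<^sub>v (Y *\<^sub>v (X *\<^sub>v w))"
    using AC XC YC w by (simp add: mult_minus_distrib_mat_vec[of _ "2*N" "2*N"] mvC)
  thus ?thesis unfolding gw_def using e[OF XC YC] e[OF YC XC] e1 AC XC YC w u
    by (simp add: om_minus_right mvC)
qed

lemma g_add: assumes X: "X \<in> L" and Y: "Y \<in> L" and P: "set P \<subseteq> L"
  shows "gw N u ((X + Y) # P) = gw N u (X # P) + gw N u (Y # P)"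
proof -
  have XC: "X \<in> carrier_mat (2*N) (2*N)" and YC: "Y \<in> carrier_mat (2*N) (2*N)" using LC X Y by auto
  define p where "p = prodw (2*N) P *\<^sub>v u"
  have p: "p \<in> carrier_vec (2*N)" unfolding p_def using pwC[OF P] .
  have "prodw (2*N) ((X + Y) # P) *\<^sub>v u = (X + Y) *\<^sub>v p"
    unfolding p_def by (rule prodw_act_cons) (use Lset[OF P] XC YC u in auto)
  moreover have "prodw (2*N) (X # P) *\<^sub>v u = X *\<^sub>v p"
    unfolding p_def by (rule prodw_act_cons) (use Lset[OF P] XC u in auto)
  moreover have "prodw (2*N) (Y # P) *\<^sub>v u = Y *\<^sub>v p"
    unfolding p_def by (rule prodw_act_cons) (use Lset[OF P] YC u in auto)
  ultimately show ?thesis unfolding gw_def using XC YC p u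
    by (simp add: add_mult_distrib_mat_vec[of _ "2*N" "2*N"] om_add_right mvC)
qed

lemma g_sm: assumes X: "X \<in> L" and P: "set P \<subseteq> L"
  shows "gw N u ((c \<cdot>\<^sub>m X) # P) = c * gw N u (X # P)"
proof -
  have XC: "X \<in> carrier_mat (2*N) (2*N)" using LC X by auto
  define p where "p = prodw (2*N) P *\<^sub>v u"
  have p: "p \<in> carrier_vec (2*N)" unfolding p_def using pwC[OF P] .
  have "prodw (2*N) ((c \<cdot>\<^sub>m X) # P) *\<^sub>v u = (c \<cdot>\<^sub>m X) *\<^sub>v p"
    unfolding p_def by (rule prodw_act_cons) (use Lset[OF P] XC u in auto)
  moreover have "prodw (2*N) (X # P) *\<^sub>v u = X *\<^sub>v p"
    unfolding p_def by (rule prodw_act_cons) (use Lset[OF P] XC u in auto)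
  ultimately show ?thesis unfolding gw_def using XC p u
    by (simp add: smult_mat_act[of _ "2*N" "2*N"] om_smult_right mvC)
qed

lemma g_D: assumes X: "X \<in> L" and IH: "\<And>P. set P \<subseteq> L \<Longrightarrow> length P < n \<Longrightarrow> gw N u P = 0"
  shows "gw N u (replicate n X) = 0"
proof -
  have XC: "X \<in> carrier_mat (2*N) (2*N)" using LC X by auto
  define pv where "pv i = prodw (2*N) (replicate i X) *\<^sub>v u" for i
  have rL: "set (replicate i X) \<subseteq> L" for i using X by (induction i) auto
  have pvC: "pv i \<in> carrier_vec (2*N)" for i unfolding pv_def using pwC[OF rL] .
  have gpv: "gw N u (replicate i X) = om N u (pv i)" for i unfolding gw_def pv_def ..
  have zero_lt: "om N u (pv i) = 0" if "i < n" for i using IH[OF rL] that gpv by auto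
  have "om N u (adp X (2*n) (Am N u) *\<^sub>v u) = 0" using bad[OF adp_L[OF X Au]] .
  moreover have "om N u (adp X (2*n) (Am N u) *\<^sub>v u) = (\<Sum>j\<le>2*n. of_nat (2*n choose j) * (om N (pv (2*n - j)) u * om N u (pv j)))"
    unfolding pv_def using ad_formula[OF X u Au u u] .
  moreover have "(\<Sum>j\<le>2*n. of_nat (2*n choose j) * (om N (pv (2*n - j)) u * om N u (pv j)))
     = (\<Sum>j\<le>2*n. if j = n then of_nat (2*n choose n) * (om N (pv n) u * om N u (pv n)) else 0)"
  proof (intro sum.cong refl)
    fix j assume j: "j \<in> {..2*n}"
    show "of_nat (2*n choose j) * (om N (pv (2*n - j)) u * om N u (pv j)) =
      (if j = n then of_nat (2*n choose n) * (om N (pv n) u * om N u (pv n)) else 0)"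
    proof (cases "j < n")
      case True
      then show ?thesis using zero_lt[of j] by simp
    next
      case False
      show ?thesis
      proof (cases "j = n")
        case True
        then show ?thesis by simp
      next
        case False
        hence "2*n - j < n" using \<open>\<not> j < n\<close> j by auto
        hence "om N (pv (2*n - j)) u = 0" using zero_lt om_antisym[OF pvC u] by simp
        then show ?thesis using False by simp
      qed
    qed
  qed
  moreover have "\<dots> = of_nat (2*n choose n) * (om N (pv n) u * om N u (pv n))" by simp
  ultimately have "of_nat (2*n choose n) * (om N (pv n) u * om N u (pv n)) = 0" by simp
  moreover have "(2*n choose n) \<noteq> 0" by simp
  ultimately have "om N (pv n) u * om N u (pv n) = 0" by simp
  hence "om N u (pv n) = 0" using om_antisym[OF pvC u] by simp
  thus ?thesis using gpv by simp
qed


lemma g_zero: assumes P: "set P \<subseteq> L" shows "gw N u P = 0"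
proof -
  have "\<forall>P. set P \<subseteq> L \<longrightarrow> length P = n \<longrightarrow> gw N u P = 0" for n
  proof (induction n rule: less_induct)
    case (less n)
    have IH': "gw N u P = 0" if "set P \<subseteq> L" "length P < n" for P using less that by blast
    have sw: "gw N u (A @ X # Y # B) = gw N u (A @ Y # X # B)"
      if "set (A @ X # Y # B) \<subseteq> L" "length (A @ X # Y # B) = n" for A X Y B
    proof -
      have A: "set A \<subseteq> L" and B: "set B \<subseteq> L" and X: "X \<in> L" and Y: "Y \<in> L" using that by auto
      have "gw N u (A @ lie_bracket X Y # B) = 0" using IH'[of "A @ lie_bracket X Y # B"] A B Lbr[OF X Y] that(2) by auto
      thus ?thesis using g_swap[OF A B X Y] by simp
    qed
    have sym: "gw N u P = gw N u Q" if "set P \<subseteq> L" "length P = n" "mset P = mset Q" for P Q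
      using perm_inv[where f = "gw N u" and S = L and n = n and A = "[]", OF sw that(3)] that by simp
    show ?case
    proof (intro allI impI)
      fix P assume "set P \<subseteq> L" "length P = n"
      show "gw N u P = 0"
      proof (rule polarize[where G = "gw N u" and S = L and n = n and Yz = "0\<^sub>m (2*N) (2*N)"])
        show "\<And>P Q. set P \<subseteq> L \<Longrightarrow> length P = n \<Longrightarrow> mset P = mset Q \<Longrightarrow> gw N u P = gw N u Q" using sym by blast
        show "\<And>X Y. X \<in> L \<Longrightarrow> Y \<in> L \<Longrightarrow> X + Y \<in> L" using Ladd by blast
        show "\<And>X c. X \<in> L \<Longrightarrow> c \<cdot>\<^sub>m X \<in> L" using Lsmult by blast
        show "\<And>X Y P. X \<in> L \<Longrightarrow> Y \<in> L \<Longrightarrow> set P \<subseteq> L \<Longrightarrow> Suc (length P) = n \<Longrightarrow>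
          gw N u ((X + Y) # P) = gw N u (X # P) + gw N u (Y # P)" using g_add by blast
        show "\<And>X c P. X \<in> L \<Longrightarrow> set P \<subseteq> L \<Longrightarrow> Suc (length P) = n \<Longrightarrow>
          gw N u ((c \<cdot>\<^sub>m X) # P) = c * gw N u (X # P)" using g_sm by blast
        show "\<And>X. X \<in> L \<Longrightarrow> gw N u (replicate n X) = 0" using g_D IH' by blast
        show "0\<^sub>m (2*N) (2*N) \<in> L" using L0 .
      qed fact+
    qed
  qed
  thus ?thesis using P by blast
qed

lemma bad_False: assumes irr: "irreducible_action (2*N) L" and unz: "u \<noteq> 0\<^sub>v (2*N)"
  shows False
proof -
  define W where "W = {x \<in> carrier_vec (2*N). \<forall>P. set P \<subseteq> L \<longrightarrow> om N u (prodw (2*N) P *\<^sub>v x) = 0}"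
  have sub: "vec_subspace (2*N) W"
    unfolding vec_subspace_def
  proof (intro conjI ballI allI)
    show "W \<subseteq> carrier_vec (2*N)" unfolding W_def by auto
    have "om N u (prodw (2*N) P *\<^sub>v 0\<^sub>v (2*N)) = 0" if "set P \<subseteq> L" for P
    proof -
      have "prodw (2*N) P *\<^sub>v 0\<^sub>v (2*N) = 0\<^sub>v (2*N)"
        using prodw_carrier[OF Lset[OF that]] by (intro eq_vecI) (auto simp: scalar_prod_def)
      thus ?thesis using om_zero_right[OF u] by simp
    qed
    thus "0\<^sub>v (2*N) \<in> W" unfolding W_def by auto
  next
    fix a b assume a: "a \<in> W" and b: "b \<in> W"
    have "om N u (prodw (2*N) P *\<^sub>v (a + b)) = 0" if P: "set P \<subseteq> L" for P
      using a b P prodw_carrier[OF Lset[OF P]] u unfolding W_def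
      by (simp add: mult_add_distrib_mat_vec[of _ "2*N" "2*N"] om_add_right mvC)
    thus "a + b \<in> W" using a b unfolding W_def by auto
  next
    fix c a assume a: "a \<in> W"
    have "om N u (prodw (2*N) P *\<^sub>v (c \<cdot>\<^sub>v a)) = 0" if P: "set P \<subseteq> L" for P
      using a P prodw_carrier[OF Lset[OF P]] u unfolding W_def
      by (simp add: mult_mat_vec[of _ "2*N" "2*N"] om_smult_right mvC)
    thus "c \<cdot>\<^sub>v a \<in> W" using a unfolding W_def by auto
  qed
  have inv: "\<forall>A\<in>L. \<forall>w\<in>W. A *\<^sub>v w \<in> W"
  proof (intro ballI)
    fix X x assume X: "X \<in> L" and x: "x \<in> W"
    have xc: "x \<in> carrier_vec (2*N)" using x unfolding W_def by auto
    have XC: "X \<in> carrier_mat (2*N) (2*N)" using LC[OF X] .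
    have "om N u (prodw (2*N) P *\<^sub>v (X *\<^sub>v x)) = 0" if P: "set P \<subseteq> L" for P
    proof -
      have "prodw (2*N) (P @ [X]) *\<^sub>v x = prodw (2*N) P *\<^sub>v (prodw (2*N) [X] *\<^sub>v x)"
        by (rule prodw_act_append) (use Lset[OF P] XC xc in auto)
      also have "prodw (2*N) [X] *\<^sub>v x = X *\<^sub>v x"
        by (subst prodw_act_cons) (use XC xc in auto)
      finally have "prodw (2*N) P *\<^sub>v (X *\<^sub>v x) = prodw (2*N) (P @ [X]) *\<^sub>v x" by simp
      thus ?thesis using x P X unfolding W_def by auto
    qed
    thus "X *\<^sub>v x \<in> W" unfolding W_def using mvC[OF XC xc] by auto
  qed
  have "W = {0\<^sub>v (2*N)} \<or> W = carrier_vec (2*N)"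
  proof -
    have "\<forall>W. vec_subspace (2*N) W \<and> (\<forall>A\<in>L. \<forall>w\<in>W. A *\<^sub>v w \<in> W) \<longrightarrow> W = {0\<^sub>v (2*N)} \<or> W = carrier_vec (2*N)"
      using irr unfolding irreducible_action_def by (rule conjunct2)
    hence "vec_subspace (2*N) W \<and> (\<forall>A\<in>L. \<forall>w\<in>W. A *\<^sub>v w \<in> W) \<longrightarrow> W = {0\<^sub>v (2*N)} \<or> W = carrier_vec (2*N)"
      by (rule spec)
    thus ?thesis using sub inv by blast
  qed
  moreover have "u \<in> W" unfolding W_def using u g_zero unfolding gw_def by auto
  ultimately have W: "W = carrier_vec (2*N)" using unz by auto
  have "om N u y = 0" if y: "y \<in> carrier_vec (2*N)" for y
  proof -
    have "y \<in> W" using W y by simp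
    hence "\<forall>P. set P \<subseteq> L \<longrightarrow> om N u (prodw (2*N) P *\<^sub>v y) = 0" unfolding W_def by auto
    hence "om N u (prodw (2*N) [] *\<^sub>v y) = 0" by (metis empty_subsetI list.set(1))
    thus ?thesis using y by simp
  qed
  hence "u = 0\<^sub>v (2*N)" using om_nondeg[OF u] by blast
  thus False using unz by simp
qed

end




context LS begin

theorem LS_main: assumes irr: "irreducible_action (2*N) L" and A: "A \<in> L"
  and r: "vec_space.rank (2*N) A = 1"
  shows "L = sp N"
proof -
  obtain u where u: "u \<in> carrier_vec (2*N)" and unz: "u \<noteq> 0\<^sub>v (2*N)" and Aeq: "A = Am N u"
    using rank1_Am[OF LC[OF A] Lsk[OF A] r] by blast
  have Au: "Am N u \<in> L" using A Aeq by simp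
  show ?thesis
  proof (cases "\<exists>X\<in>L. om N u (X *\<^sub>v u) \<noteq> 0")
    case True
    then obtain X where X: "X \<in> L" and c0: "om N u (X *\<^sub>v u) \<noteq> 0" by blast
    define x where "x = X *\<^sub>v u"
    define c where "c = om N u x"
    have x: "x \<in> carrier_vec (2*N)" unfolding x_def using mvC[OF LC[OF X] u] .
    have c: "c \<noteq> 0" using c0 unfolding c_def x_def .
    have Ax: "Am N x \<in> L" unfolding x_def using partner[OF u Au X c0] .
    define v where "v = (1/c) \<cdot>\<^sub>v x"
    have v: "v \<in> carrier_vec (2*N)" unfolding v_def using x by simp
    have Av: "Am N v \<in> L" unfolding v_def using Am_smult[OF x] Lsmult[OF Ax] by simp
    have uv: "om N u v = 1" unfolding v_def using om_smult_right[OF x u] c unfolding c_def by simp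
    interpret S: SL2 N L u v
      by unfold_locales (use sub Lsp u v Au Av uv in auto)
    have "sp N \<subseteq> L"
    proof
      fix M assume "M \<in> sp N"
      thus "M \<in> L" using sp_in_L S.E_all[OF irr] by blast
    qed
    thus ?thesis using Lsp by blast
  next
    case False
    interpret B: BAD N L u
      by unfold_locales (use sub Lsp u Au False in auto)
    show ?thesis using B.bad_False[OF irr unz] by simp
  qed
qed

end

theorem theorem3p3:
  shows "\<exists>g0::nat. \<forall>g::nat. \<forall>L::complex mat set. \<forall>A::complex mat.
     g \<ge> g0 \<and>
     semisimple_lie (4*g-4) L \<and>
     diag_emb (g-5) (2*g-2) ` sp (g-5) \<subseteq> L \<and>
     L \<subseteq> sp (2*g-2) \<and>
     irreducible_action (4*g-4) L \<and>
     A \<in> L \<and> nilpotent_mat (4*g-4) A \<and> vec_space.rank (4*g-4) A = 1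
     \<longrightarrow> L = sp (2*g-2)"
proof (intro exI allI impI)
  fix g :: nat and L :: "complex mat set" and A :: "complex mat"
  assume h: "0 \<le> g \<and>
     semisimple_lie (4*g-4) L \<and>
     diag_emb (g-5) (2*g-2) ` sp (g-5) \<subseteq> L \<and>
     L \<subseteq> sp (2*g-2) \<and>
     irreducible_action (4*g-4) L \<and>
     A \<in> L \<and> nilpotent_mat (4*g-4) A \<and> vec_space.rank (4*g-4) A = 1"
  have n: "4*g-4 = 2*(2*g-2)" by simp
  have sub: "lie_subalgebra (2*(2*g-2)) L" using h n unfolding semisimple_lie_def by metis
  interpret LS "2*g-2" L by unfold_locales (use sub h in auto)
  show "L = sp (2*g-2)" using LS_main h n by metis
qed


end
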